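(* Define recursively, backward in $t=T-1,\dots,0$, starting from $a_T^+=a_T^-=b_T^+=b_T^-=0$: $\mathbf K_t^+\in\arg\min_{\mathbf K\in\mathbb R^n}F_t^+(\mathbf K)$, $\mathbf K_t^-\in\arg\min_{\mathbf K\in\mathbb R^n}F_t^-(\mathbf K)$ (with $F_t^\pm$ built from $a_{t+1}^\pm,b_{t+1}^\pm$), and $$a_t^+=\rho_{t+1}\mathbb E[\mathbf P_t]'\mathbf K_t^++\mathbb E[a_{t+1}^+Z_t^+1_{\{Z_t^+\ge0\}}]+\mathbb E[a_{t+1}^-Z_t^+1_{\{Z_t^+<0\}}],$$ $$a_t^-=\rho_{t+1}\mathbb E[\mathbf P_t]'\mathbf K_t^-+\mathbb E[a_{t+1}^+Z_t^-1_{\{Z_t^-\le0\}}]+\mathbb E[a_{t+1}^-Z_t^-1_{\{Z_t^->0\}}],$$ $$b_t^+=\rho_{t+1}^2(\mathbf K_t^+)'\mathbb E[\mathbf P_t\mathbf P_t']\mathbf K_t^++2\rho_{t+1}\mathbb E[a_{t+1}^+Z_t^+\mathbf P_t'\mathbf K_t^+1_{\{Z_t^+\ge0\}}]+2\rho_{t+1}\mathbb E[a_{t+1}^-Z_t^+\mathbf P_t'\mathbf K_t^+1_{\{Z_t^+<0\}}]+\mathbb E[b_{t+1}^+(Z_t^+)^21_{\{Z_t^+\ge0\}}]+\mathbb E[b_{t+1}^-(Z_t^+)^21_{\{Z_t^+<0\}}],$$ $$b_t^-=\rho_{t+1}^2(\mathbf K_t^-)'\mathbb E[\mathbf P_t\mathbf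 P_t']\mathbf K_t^-+2\rho_{t+1}\mathbb E[a_{t+1}^+Z_t^-\mathbf P_t'\mathbf K_t^-1_{\{Z_t^-\le0\}}]+2\rho_{t+1}\mathbb E[a_{t+1}^-Z_t^-\mathbf P_t'\mathbf K_t^-1_{\{Z_t^->0\}}]+\mathbb E[b_{t+1}^+(Z_t^-)^21_{\{Z_t^-\le0\}}]+\mathbb E[b_{t+1}^-(Z_t^-)^21_{\{Z_t^->0\}}],$$ where $Z_t^\pm=s_t+\mathbf P_t'\mathbf K_t^\pm$. Then these quantities are well defined (the minimizers exist), $b_t^+-(a_t^+)^2\ge0$ and $b_t^--(a_t^-)^2\ge0$ for all $t$, and the time consistent behavioral portfolio policy of the nested problem is, for $t=0,\dots,T-1$, $$\mathbf u_t^{TC}=\mathbf K_t^+(X_t-\rho_t^{-1}W)1_{\{X_t\ge\rho_t^{-1}W\}}+\mathbf K_t^-(X_t-\rho_t^{-1}W)1_{\{X_t<\rho_t^{-1}W\}}.$$ Moreover, the mean and variance of the terminal wealth under this policy are $$\mathbb E[X_T\mid X_0]=\rho_0X_0+a_0^+(X_0-\rho_0^{-1}W)1_{\{X_0\ge\rho_0^{-1}W\}}+a_0^-(X_0-\rho_0^{-1}W)1_{\{X_0<\rho_0^{-1}W\}},$$ $$\mathrm{Var}(X_T\mid X_0)=\Big[(b_0^+-(a_0^+)^2)1_{\{X_0\ge\rho_0^{-1}W\}}+(b_0^--(a_0^-)^2)1_{\{X_0<\rho_0^{-1}W\}}\Big](X_0-\rho_0^{-1}W)^2.$$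
   Context: Market: $T$ periods, one risk-free asset with deterministic gross return $s_t>1$ in period $t$, and $n$ risky assets with random gross return vector $\mathbf e_t$ in period $t$. The excess return vector is $\mathbf P_t=\mathbf e_t-s_t\mathbf 1\in\mathbb R^n$. The vectors $\mathbf P_0,\dots,\mathbf P_{T-1}$ are statistically independent, absolutely continuous, with finite first and second moments, and each covariance matrix $\mathrm{Cov}(\mathbf P_t)=\mathbb E[\mathbf P_t\mathbf P_t']-\mathbb E[\mathbf P_t]\mathbb E[\mathbf P_t]'$ is positive definite. The market is arbitrage-free; in particular, for every nonzero $\mathbf L\in\mathbb R^n$, neither $\mathbf P_t'\mathbf L\le 0$ a.s. nor $\mathbf P_t'\mathbf L\ge 0$ a.s. holds. Write $\rho_t=\prod_{j=t}^{T-1}s_j$ for $t<T$ and $\rho_T=1$. Wealth dynamics: $X_{t+1}=s_tX_t+\mathbf P_t'\mathbf u_t$, where $\mathbf u_t\in\mathbb R^n$ (amounts in risky assets) is a Markov feedback policy, i.e. a deterministic function of the current wealth $X_t$. An investment target $W\in\mathbb R$ is fixed. Behavioral risk aversion: for constants $\gamma_t^+,\gamma_t^-\ge0$, $\gamma_t(X_t)=\gamma_t^+(X_t-\rho_t^{-1}W)$ if $X_t\ge\rho_t^{-1}W$, and $\gamma_t(X_t)=-\gamma_t^-(X_t-\rho_t^{-1}W)$ if $X_t<\rho_t^{-1}W$. Time consistent policy (nested mean-variance problem): a Markov policy $(\mathbf u_0^{TC},\dots,\mathbf u_{T-1}^{TC})$ is time consistent if for every $t$ and every wealth level $X_t$,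 $\mathbf u_t^{TC}(X_t)$ minimizes over $\mathbf u_t\in\mathbb R^n$ the objective $\mathrm{Var}(X_T\mid X_t)-\gamma_t(X_t)\mathbb E[X_T\mid X_t]$, where $X_{t+1}=s_tX_t+\mathbf P_t'\mathbf u_t$ and $X_{j+1}=s_jX_j+\mathbf P_j'\mathbf u_j^{TC}(X_j)$ for $j=t+1,\dots,T-1$. Definition of $F_t^\pm:\mathbb R^n\to\mathbb R$, given deterministic numbers $a_{t+1}^\pm,b_{t+1}^\pm,\gamma_t^\pm$, writing $Z=s_t+\mathbf P_t'\mathbf K$: $$F_t^+(\mathbf K)=\rho_{t+1}^2\mathbf K'\mathrm{Cov}(\mathbf P_t)\mathbf K+\mathbb E\big[(2\rho_{t+1}a_{t+1}^++b_{t+1}^+)Z^21_{\{Z\ge0\}}\big]+\mathbb E\big[(2\rho_{t+1}a_{t+1}^-+b_{t+1}^-)Z^21_{\{Z<0\}}\big]-M_+^2-2\rho_{t+1}M_+\,(s_t+\mathbb E[\mathbf P_t]'\mathbf K)-\gamma_t^+M_+-\rho_{t+1}\gamma_t^+(s_t+\mathbb E[\mathbf P_t]'\mathbf K),$$ where $M_+=\mathbb E[a_{t+1}^+Z1_{\{Z\ge0\}}]+\mathbb E[a_{t+1}^-Z1_{\{Z<0\}}]$; and $$F_t^-(\mathbf K)=\rho_{t+1}^2\mathbf K'\mathrm{Cov}(\mathbf P_t)\mathbf K+\mathbb E\big[(2\rho_{t+1}a_{t+1}^++b_{t+1}^+)Z^21_{\{Z\le0\}}\big]+\mathbb E\big[(2\rho_{t+1}a_{t+1}^-+b_{t+1}^-)Z^21_{\{Z>0\}}\big]-M_-^2-2\rho_{t+1}M_-\,(s_t+\mathbb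 E[\mathbf P_t]'\mathbf K)+\gamma_t^-M_-+\rho_{t+1}\gamma_t^-(s_t+\mathbb E[\mathbf P_t]'\mathbf K),$$ where $M_-=\mathbb E[a_{t+1}^+Z1_{\{Z\le0\}}]+\mathbb E[a_{t+1}^-Z1_{\{Z>0\}}]$. *)

theory Defs
  imports "HOL-Probability.Probability"
begin

definition rho :: "(nat \<Rightarrow> real) \<Rightarrow> nat \<Rightarrow> nat \<Rightarrow> real" where
  "rho s T t = (\<Prod>j\<in>{t..<T}. s j)"

definition mean_vec :: "'w measure \<Rightarrow> ('w \<Rightarrow> real^'n) \<Rightarrow> real^'n" where
  "mean_vec M X = (\<chi> i. integral\<^sup>L M (\<lambda>\<omega>. X \<omega> $ i))"

definition second_moment :: "'w measure \<Rightarrow> ('w \<Rightarrow> real^'n) \<Rightarrow> real^'n^'n" where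
  "second_moment M X = (\<chi> i j. integral\<^sup>L M (\<lambda>\<omega>. X \<omega> $ i * X \<omega> $ j))"

definition cov_matrix :: "'w measure \<Rightarrow> ('w \<Rightarrow> real^'n) \<Rightarrow> real^'n^'n" where
  "cov_matrix M X = (\<chi> i j. integral\<^sup>L M (\<lambda>\<omega>. X \<omega> $ i * X \<omega> $ j)
      - integral\<^sup>L M (\<lambda>\<omega>. X \<omega> $ i) * integral\<^sup>L M (\<lambda>\<omega>. X \<omega> $ j))"

definition pos_def_matrix :: "real^'n^'n \<Rightarrow> bool" where
  "pos_def_matrix A \<longleftrightarrow> (\<forall>x. x \<noteq> 0 \<longrightarrow> 0 < x \<bullet> (A *v x))"

definition var :: "'w measure \<Rightarrow> ('w \<Rightarrow> real) \<Rightarrow> real" where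
  "var M X = integral\<^sup>L M (\<lambda>\<omega>. (X \<omega> - integral\<^sup>L M X)\<^sup>2)"

text \<open>wealth s P u t k x \<omega>: wealth at time t+k when the wealth at time t is x and the
  Markov feedback policy u is used at times t, ..., t+k-1.\<close>
fun wealth :: "(nat \<Rightarrow> real) \<Rightarrow> (nat \<Rightarrow> 'w \<Rightarrow> real^'n) \<Rightarrow> (nat \<Rightarrow> real \<Rightarrow> real^'n)
      \<Rightarrow> nat \<Rightarrow> nat \<Rightarrow> real \<Rightarrow> 'w \<Rightarrow> real" where
  "wealth s P u t 0 x \<omega> = x"
| "wealth s P u t (Suc k) x \<omega> = wealth s P u (Suc t) k (s t * x + P t \<omega> \<bullet> u t x) \<omega>"

text \<open>Terminal wealth X_T given X_t = x, using the amount v at time t and policy u afterwards.\<close>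
definition terminal_dev :: "(nat \<Rightarrow> real) \<Rightarrow> (nat \<Rightarrow> 'w \<Rightarrow> real^'n) \<Rightarrow> (nat \<Rightarrow> real \<Rightarrow> real^'n)
      \<Rightarrow> nat \<Rightarrow> nat \<Rightarrow> real \<Rightarrow> real^'n \<Rightarrow> 'w \<Rightarrow> real" where
  "terminal_dev s P u T t x v \<omega> = wealth s P u (Suc t) (T - Suc t) (s t * x + P t \<omega> \<bullet> v) \<omega>"

definition gamma_beh :: "(nat \<Rightarrow> real) \<Rightarrow> nat \<Rightarrow> real \<Rightarrow> (nat \<Rightarrow> real) \<Rightarrow> (nat \<Rightarrow> real)
      \<Rightarrow> nat \<Rightarrow> real \<Rightarrow> real" where
  "gamma_beh s T W gp gm t x =
     (if W / rho s T t \<le> x then gp t * (x - W / rho s T t) else - gm t * (x - W / rho s T t))"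

definition time_consistent :: "'w measure \<Rightarrow> (nat \<Rightarrow> real) \<Rightarrow> (nat \<Rightarrow> 'w \<Rightarrow> real^'n) \<Rightarrow> nat
      \<Rightarrow> (nat \<Rightarrow> real \<Rightarrow> real) \<Rightarrow> (nat \<Rightarrow> real \<Rightarrow> real^'n) \<Rightarrow> bool" where
  "time_consistent M s P T gam u \<longleftrightarrow>
     (\<forall>t<T. \<forall>x. \<forall>v.
        var M (terminal_dev s P u T t x (u t x)) - gam t x * integral\<^sup>L M (terminal_dev s P u T t x (u t x))
        \<le> var M (terminal_dev s P u T t x v) - gam t x * integral\<^sup>L M (terminal_dev s P u T t x v))"

definition Fplus :: "'w measure \<Rightarrow> (nat \<Rightarrow> real) \<Rightarrow> (nat \<Rightarrow> 'w \<Rightarrow> real^'n) \<Rightarrow> nat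
    \<Rightarrow> (nat \<Rightarrow> real) \<Rightarrow> (nat \<Rightarrow> real) \<Rightarrow> (nat \<Rightarrow> real) \<Rightarrow> (nat \<Rightarrow> real) \<Rightarrow> (nat \<Rightarrow> real)
    \<Rightarrow> nat \<Rightarrow> real^'n \<Rightarrow> real" where
  "Fplus M s P T ap am bp bm gp t K =
    (let r = rho s T (Suc t);
         Z = (\<lambda>\<omega>. s t + P t \<omega> \<bullet> K);
         Mp = integral\<^sup>L M (\<lambda>\<omega>. ap (Suc t) * Z \<omega> * of_bool (Z \<omega> \<ge> 0))
            + integral\<^sup>L M (\<lambda>\<omega>. am (Suc t) * Z \<omega> * of_bool (Z \<omega> < 0));
         EZ = s t + mean_vec M (P t) \<bullet> K
     in r\<^sup>2 * (K \<bullet> (cov_matrix M (P t) *v K))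
        + integral\<^sup>L M (\<lambda>\<omega>. (2 * r * ap (Suc t) + bp (Suc t)) * (Z \<omega>)\<^sup>2 * of_bool (Z \<omega> \<ge> 0))
        + integral\<^sup>L M (\<lambda>\<omega>. (2 * r * am (Suc t) + bm (Suc t)) * (Z \<omega>)\<^sup>2 * of_bool (Z \<omega> < 0))
        - Mp\<^sup>2 - 2 * r * Mp * EZ - gp t * Mp - r * gp t * EZ)"

definition Fminus :: "'w measure \<Rightarrow> (nat \<Rightarrow> real) \<Rightarrow> (nat \<Rightarrow> 'w \<Rightarrow> real^'n) \<Rightarrow> nat
    \<Rightarrow> (nat \<Rightarrow> real) \<Rightarrow> (nat \<Rightarrow> real) \<Rightarrow> (nat \<Rightarrow> real) \<Rightarrow> (nat \<Rightarrow> real) \<Rightarrow> (nat \<Rightarrow> real)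
    \<Rightarrow> nat \<Rightarrow> real^'n \<Rightarrow> real" where
  "Fminus M s P T ap am bp bm gm t K =
    (let r = rho s T (Suc t);
         Z = (\<lambda>\<omega>. s t + P t \<omega> \<bullet> K);
         Mm = integral\<^sup>L M (\<lambda>\<omega>. ap (Suc t) * Z \<omega> * of_bool (Z \<omega> \<le> 0))
            + integral\<^sup>L M (\<lambda>\<omega>. am (Suc t) * Z \<omega> * of_bool (Z \<omega> > 0));
         EZ = s t + mean_vec M (P t) \<bullet> K
     in r\<^sup>2 * (K \<bullet> (cov_matrix M (P t) *v K))
        + integral\<^sup>L M (\<lambda>\<omega>. (2 * r * ap (Suc t) + bp (Suc t)) * (Z \<omega>)\<^sup>2 * of_bool (Z \<omega> \<le> 0))
        + integral\<^sup>L M (\<lambda>\<omega>. (2 * r * am (Suc t) + bm (Suc t)) * (Z \<omega>)\<^sup>2 * of_bool (Z \<omega> > 0))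
        - Mm\<^sup>2 - 2 * r * Mm * EZ + gm t * Mm + r * gm t * EZ)"

definition recursion_step :: "'w measure \<Rightarrow> (nat \<Rightarrow> real) \<Rightarrow> (nat \<Rightarrow> 'w \<Rightarrow> real^'n) \<Rightarrow> nat
    \<Rightarrow> (nat \<Rightarrow> real) \<Rightarrow> (nat \<Rightarrow> real)
    \<Rightarrow> (nat \<Rightarrow> real^'n) \<Rightarrow> (nat \<Rightarrow> real^'n)
    \<Rightarrow> (nat \<Rightarrow> real) \<Rightarrow> (nat \<Rightarrow> real) \<Rightarrow> (nat \<Rightarrow> real) \<Rightarrow> (nat \<Rightarrow> real) \<Rightarrow> nat \<Rightarrow> bool" where
  "recursion_step M s P T gp gm Kp Km ap am bp bm t \<longleftrightarrow>
    (let r = rho s T (Suc t);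
         Zp = (\<lambda>\<omega>. s t + P t \<omega> \<bullet> Kp t);
         Zm = (\<lambda>\<omega>. s t + P t \<omega> \<bullet> Km t)
     in (\<forall>K. Fplus M s P T ap am bp bm gp t (Kp t) \<le> Fplus M s P T ap am bp bm gp t K)
      \<and> (\<forall>K. Fminus M s P T ap am bp bm gm t (Km t) \<le> Fminus M s P T ap am bp bm gm t K)
      \<and> ap t = r * (mean_vec M (P t) \<bullet> Kp t)
          + integral\<^sup>L M (\<lambda>\<omega>. ap (Suc t) * Zp \<omega> * of_bool (Zp \<omega> \<ge> 0))
          + integral\<^sup>L M (\<lambda>\<omega>. am (Suc t) * Zp \<omega> * of_bool (Zp \<omega> < 0))
      \<and> am t = r * (mean_vec M (P t) \<bullet> Km t)
          + integral\<^sup>L M (\<lambda>\<omega>. ap (Suc t) * Zm \<omega> * of_bool (Zm \<omega> \<le> 0))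
          + integral\<^sup>L M (\<lambda>\<omega>. am (Suc t) * Zm \<omega> * of_bool (Zm \<omega> > 0))
      \<and> bp t = r\<^sup>2 * (Kp t \<bullet> (second_moment M (P t) *v Kp t))
          + 2 * r * integral\<^sup>L M (\<lambda>\<omega>. ap (Suc t) * Zp \<omega> * (P t \<omega> \<bullet> Kp t) * of_bool (Zp \<omega> \<ge> 0))
          + 2 * r * integral\<^sup>L M (\<lambda>\<omega>. am (Suc t) * Zp \<omega> * (P t \<omega> \<bullet> Kp t) * of_bool (Zp \<omega> < 0))
          + integral\<^sup>L M (\<lambda>\<omega>. bp (Suc t) * (Zp \<omega>)\<^sup>2 * of_bool (Zp \<omega> \<ge> 0))
          + integral\<^sup>L M (\<lambda>\<omega>. bm (Suc t) * (Zp \<omega>)\<^sup>2 * of_bool (Zp \<omega> < 0))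
      \<and> bm t = r\<^sup>2 * (Km t \<bullet> (second_moment M (P t) *v Km t))
          + 2 * r * integral\<^sup>L M (\<lambda>\<omega>. ap (Suc t) * Zm \<omega> * (P t \<omega> \<bullet> Km t) * of_bool (Zm \<omega> \<le> 0))
          + 2 * r * integral\<^sup>L M (\<lambda>\<omega>. am (Suc t) * Zm \<omega> * (P t \<omega> \<bullet> Km t) * of_bool (Zm \<omega> > 0))
          + integral\<^sup>L M (\<lambda>\<omega>. bp (Suc t) * (Zm \<omega>)\<^sup>2 * of_bool (Zm \<omega> \<le> 0))
          + integral\<^sup>L M (\<lambda>\<omega>. bm (Suc t) * (Zm \<omega>)\<^sup>2 * of_bool (Zm \<omega> > 0)))"

definition recursion_from :: "'w measure \<Rightarrow> (nat \<Rightarrow> real) \<Rightarrow> (nat \<Rightarrow> 'w \<Rightarrow> real^'n) \<Rightarrow> nat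
    \<Rightarrow> (nat \<Rightarrow> real) \<Rightarrow> (nat \<Rightarrow> real)
    \<Rightarrow> (nat \<Rightarrow> real^'n) \<Rightarrow> (nat \<Rightarrow> real^'n)
    \<Rightarrow> (nat \<Rightarrow> real) \<Rightarrow> (nat \<Rightarrow> real) \<Rightarrow> (nat \<Rightarrow> real) \<Rightarrow> (nat \<Rightarrow> real) \<Rightarrow> nat \<Rightarrow> bool" where
  "recursion_from M s P T gp gm Kp Km ap am bp bm t0 \<longleftrightarrow>
     ap T = 0 \<and> am T = 0 \<and> bp T = 0 \<and> bm T = 0 \<and>
     (\<forall>t. t0 \<le> t \<and> t < T \<longrightarrow> recursion_step M s P T gp gm Kp Km ap am bp bm t)"

definition tc_policy :: "(nat \<Rightarrow> real) \<Rightarrow> nat \<Rightarrow> real \<Rightarrow> (nat \<Rightarrow> real^'n) \<Rightarrow> (nat \<Rightarrow> real^'n)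
    \<Rightarrow> nat \<Rightarrow> real \<Rightarrow> real^'n" where
  "tc_policy s T W Kp Km t x =
     ((x - W / rho s T t) * of_bool (x \<ge> W / rho s T t)) *\<^sub>R Kp t
   + ((x - W / rho s T t) * of_bool (x < W / rho s T t)) *\<^sub>R Km t"

end

theory Submission
  imports Defs
begin

definition pl :: "real \<Rightarrow> real \<Rightarrow> real \<Rightarrow> real" where
  "pl a b z = a * max z 0 + b * min z 0"

lemma pl_if: "pl a b z = (if z \<ge> 0 then a else b) * z"
  by (auto simp: pl_def max_def min_def)

lemma pl_cont: "continuous_on A (pl a b)"
  unfolding pl_def by (intro continuous_intros)

lemma pl_hom: "c \<ge> 0 \<Longrightarrow> pl a b (c * z) = c * pl a b z"
  by (cases "z \<ge> 0") (auto simp: pl_if mult_nonneg_nonneg zero_le_mult_iff)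

lemma pl_hom_neg: "c \<le> 0 \<Longrightarrow> pl a b (c * z) = c * pl b a z"
  by (cases "z \<ge> 0"; cases "z = 0"; cases "c = 0") (auto simp: pl_if zero_le_mult_iff)

lemma pl_abs: "\<bar>pl a b z\<bar> \<le> (\<bar>a\<bar> + \<bar>b\<bar>) * \<bar>z\<bar>"
  by (auto simp: pl_if abs_mult intro: mult_right_mono)

lemma pl_lip: "\<bar>pl a b z - pl a b y\<bar> \<le> (\<bar>a\<bar> + \<bar>b\<bar>) * \<bar>z - y\<bar>"
proof -
  have 1: "\<bar>max z 0 - max y 0\<bar> \<le> \<bar>z - y\<bar>" "\<bar>min z 0 - min y 0\<bar> \<le> \<bar>z - y\<bar>"
    by (auto simp: max_def min_def)
  have "\<bar>a * (max z 0 - max y 0) + b * (min z 0 - min y 0)\<bar> \<le> \<bar>a\<bar> * \<bar>max z 0 - max y 0\<bar> + \<bar>b\<bar> * \<bar>min z 0 - min y 0\<bar>"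
    by (rule order_trans[OF abs_triangle_ineq]) (simp add: abs_mult)
  also have "\<dots> \<le> \<bar>a\<bar> * \<bar>z - y\<bar> + \<bar>b\<bar> * \<bar>z - y\<bar>"
    using 1 by (intro add_mono mult_left_mono) auto
  finally show ?thesis by (simp add: pl_def algebra_simps)
qed

lemma abs_prod_le: "\<bar>x * y\<bar> \<le> x\<^sup>2 + (y::real)\<^sup>2"
proof -
  have "2 * \<bar>x\<bar> * \<bar>y\<bar> \<le> \<bar>x\<bar>\<^sup>2 + \<bar>y\<bar>\<^sup>2" by (rule sum_squares_bound)
  moreover have "0 \<le> \<bar>x\<bar> * \<bar>y\<bar>" by simp
  ultimately show ?thesis unfolding abs_mult power2_abs by linarith
qed

lemma pl_meas[measurable]: "f \<in> borel_measurable M \<Longrightarrow> (\<lambda>x. pl a b (f x)) \<in> borel_measurable M"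
  unfolding pl_def by (intro borel_measurable_add borel_measurable_times borel_measurable_const borel_measurable_max borel_measurable_min)

lemma pl_zero: "pl 0 0 z = 0" by (simp add: pl_def)

locale onevec = prob_space M for M :: "'w measure" +
  fixes X :: "'w \<Rightarrow> real^'n"
  assumes Xm[measurable]: "X \<in> borel_measurable M"
  and int1: "\<And>i. integrable M (\<lambda>\<omega>. X \<omega> $ i)"
  and int2: "\<And>i. integrable M (\<lambda>\<omega>. (X \<omega> $ i)\<^sup>2)"
begin

lemma comp_meas[measurable]: "(\<lambda>\<omega>. X \<omega> $ i) \<in> borel_measurable M"
  using measurable_compose[OF Xm borel_measurable_continuous_onI[OF continuous_on_component[OF continuous_on_id]]] by simp

lemma int_prod: "integrable M (\<lambda>\<omega>. X \<omega> $ i * X \<omega> $ j)"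
proof (rule Bochner_Integration.integrable_bound[OF Bochner_Integration.integrable_add[OF int2[of i] int2[of j]]])
  show "(\<lambda>\<omega>. X \<omega> $ i * X \<omega> $ j) \<in> borel_measurable M" by measurable
  show "AE x in M. norm (X x $ i * X x $ j) \<le> norm ((X x $ i)\<^sup>2 + (X x $ j)\<^sup>2)"
    using abs_prod_le by (auto intro!: AE_I2)
qed

lemma inner_sum: "X \<omega> \<bullet> K = (\<Sum>i\<in>UNIV. K $ i * X \<omega> $ i)"
  by (simp add: inner_vec_def mult.commute)

lemma int_lin: "integrable M (\<lambda>\<omega>. X \<omega> \<bullet> K)"
  unfolding inner_sum by (intro Bochner_Integration.integrable_sum integrable_mult_right int1)

lemma integral_lin: "integral\<^sup>L M (\<lambda>\<omega>. X \<omega> \<bullet> K) = mean_vec M X \<bullet> K"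
  unfolding inner_sum
  by (simp add: Bochner_Integration.integral_sum int1 mean_vec_def inner_vec_def mult.commute)

lemma sq_expand: "(X \<omega> \<bullet> K)\<^sup>2 = (\<Sum>i\<in>UNIV. \<Sum>j\<in>UNIV. K $ i * K $ j * (X \<omega> $ i * X \<omega> $ j))"
  unfolding inner_sum power2_eq_square sum_product by (simp add: algebra_simps)

lemma int_sq: "integrable M (\<lambda>\<omega>. (X \<omega> \<bullet> K)\<^sup>2)"
  unfolding sq_expand by (intro Bochner_Integration.integrable_sum integrable_mult_right int_prod)

lemma integral_sq: "integral\<^sup>L M (\<lambda>\<omega>. (X \<omega> \<bullet> K)\<^sup>2) = K \<bullet> (second_moment M X *v K)"
  unfolding sq_expand
  by (simp add: Bochner_Integration.integral_sum int_prod integrable_mult_right second_moment_def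
      inner_vec_def matrix_vector_mult_def sum_distrib_left algebra_simps)

lemma cov_eq: "K \<bullet> (cov_matrix M X *v K) = integral\<^sup>L M (\<lambda>\<omega>. (X \<omega> \<bullet> K)\<^sup>2) - (integral\<^sup>L M (\<lambda>\<omega>. X \<omega> \<bullet> K))\<^sup>2"
proof -
  have "K \<bullet> (cov_matrix M X *v K) = K \<bullet> (second_moment M X *v K) - (\<Sum>i\<in>UNIV. \<Sum>j\<in>UNIV. K $ i * K $ j * (integral\<^sup>L M (\<lambda>\<omega>. X \<omega> $ i) * integral\<^sup>L M (\<lambda>\<omega>. X \<omega> $ j)))"
    by (simp add: cov_matrix_def second_moment_def inner_vec_def matrix_vector_mult_def
        sum_distrib_left algebra_simps sum_subtractf)
  also have "(\<Sum>i\<in>UNIV. \<Sum>j\<in>UNIV. K $ i * K $ j * (integral\<^sup>L M (\<lambda>\<omega>. X \<omega> $ i) * integral\<^sup>L M (\<lambda>\<omega>. X \<omega> $ j)))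
     = (mean_vec M X \<bullet> K)\<^sup>2"
    by (simp add: mean_vec_def inner_vec_def power2_eq_square sum_product algebra_simps)
  finally show ?thesis by (simp add: integral_sq integral_lin)
qed

end


lemma cont_param_integral:
  fixes h :: "real^'n \<Rightarrow> 'w \<Rightarrow> real"
  assumes meas: "\<And>K. h K \<in> borel_measurable M"
   and cont: "\<And>\<omega>. \<omega> \<in> space M \<Longrightarrow> continuous_on UNIV (\<lambda>K. h K \<omega>)"
   and D: "integrable M D"
   and bound: "\<And>K \<omega>. \<omega> \<in> space M \<Longrightarrow> \<bar>h K \<omega>\<bar> \<le> (1 + norm K)\<^sup>2 * D \<omega>"
  shows "continuous_on UNIV (\<lambda>K. integral\<^sup>L M (h K))"
proof (rule continuous_on_sequentiallyI)
  fix x and a :: "real^'n"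
  assume lim: "x \<longlonglongrightarrow> a"
  then have "Bseq x" using convergent_imp_Bseq convergentI by blast
  then obtain B where B: "B > 0" "\<And>n. norm (x n) \<le> B" by (auto elim: BseqE)
  have Dnn: "\<And>\<omega>. \<omega> \<in> space M \<Longrightarrow> 0 \<le> D \<omega>"
  proof -
    fix \<omega> assume w: "\<omega> \<in> space M"
    have "\<bar>h 0 \<omega>\<bar> \<le> D \<omega>" using bound[OF w, of 0] by simp
    then show "0 \<le> D \<omega>" by (rule order_trans[OF abs_ge_zero])
  qed
  have m1: "h a \<in> borel_measurable M" "\<And>i. h (x i) \<in> borel_measurable M" by (rule meas)+
  have i1: "integrable M (\<lambda>\<omega>. (1 + B)\<^sup>2 * D \<omega>)" using D by simp
  have l1: "AE \<omega> in M. (\<lambda>i. h (x i) \<omega>) \<longlonglongrightarrow> h a \<omega>"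
  proof (rule AE_I2)
    fix \<omega> assume "\<omega> \<in> space M"
    then have "continuous_on UNIV (\<lambda>K. h K \<omega>)" by (rule cont)
    then have "isCont (\<lambda>K. h K \<omega>) a" by (simp add: continuous_on_eq_continuous_at)
    then show "(\<lambda>i. h (x i) \<omega>) \<longlonglongrightarrow> h a \<omega>" using lim by (rule isCont_tendsto_compose)
  qed
  have b1: "AE \<omega> in M. norm (h (x i) \<omega>) \<le> (1 + B)\<^sup>2 * D \<omega>" for i
  proof (rule AE_I2)
    fix \<omega> assume w: "\<omega> \<in> space M"
    have "(1 + norm (x i))\<^sup>2 \<le> (1 + B)\<^sup>2" using B(2)[of i] by (intro power_mono) auto
    then have "(1 + norm (x i))\<^sup>2 * D \<omega> \<le> (1 + B)\<^sup>2 * D \<omega>" using Dnn[OF w] by (rule mult_right_mono)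
    then show "norm (h (x i) \<omega>) \<le> (1 + B)\<^sup>2 * D \<omega>" using bound[OF w, of "x i"] by simp
  qed
  show "(\<lambda>n. integral\<^sup>L M (h (x n))) \<longlonglongrightarrow> integral\<^sup>L M (h a)"
    by (rule integral_dominated_convergence[OF m1 i1 l1 b1])
qed


lemma var_eq_prob:
  assumes "prob_space M" "integrable M f" "integrable M (\<lambda>x. (f x)\<^sup>2)"
  shows "var M f = integral\<^sup>L M (\<lambda>x. (f x)\<^sup>2) - (integral\<^sup>L M f)\<^sup>2"
  using prob_space.variance_eq[OF assms] unfolding var_def by simp

lemma var_nonneg: "var M f \<ge> 0"
  unfolding var_def by (rule integral_nonneg_AE) auto

context onevec
begin

definition A :: "'w \<Rightarrow> real" where "A \<omega> = (\<Sum>i\<in>UNIV. \<bar>X \<omega> $ i\<bar>)"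

lemma A_meas[measurable]: "A \<in> borel_measurable M"
  unfolding A_def by measurable

lemma A_nonneg: "0 \<le> A \<omega>"
  unfolding A_def by (intro sum_nonneg) auto

lemma int_A: "integrable M A"
  unfolding A_def by (intro Bochner_Integration.integrable_sum integrable_abs int1)

lemma int_A2: "integrable M (\<lambda>\<omega>. (A \<omega>)\<^sup>2)"
proof -
  have "(A \<omega>)\<^sup>2 = (\<Sum>i\<in>UNIV. \<Sum>j\<in>UNIV. \<bar>X \<omega> $ i * X \<omega> $ j\<bar>)" for \<omega>
    unfolding A_def power2_eq_square sum_product abs_mult ..
  then show ?thesis
    by (simp only:) (intro Bochner_Integration.integrable_sum integrable_abs int_prod)
qed

lemma inner_le: "\<bar>X \<omega> \<bullet> K\<bar> \<le> A \<omega> * norm K"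
proof -
  have "\<bar>X \<omega> \<bullet> K\<bar> \<le> (\<Sum>i\<in>UNIV. \<bar>K $ i * X \<omega> $ i\<bar>)"
    unfolding inner_sum by (rule sum_abs)
  also have "\<dots> \<le> (\<Sum>i\<in>UNIV. norm K * \<bar>X \<omega> $ i\<bar>)"
    by (intro sum_mono) (auto simp: abs_mult intro: mult_right_mono component_le_norm_cart)
  finally show ?thesis by (simp add: A_def sum_distrib_left mult.commute)
qed

definition D :: "'w \<Rightarrow> real" where "D \<omega> = (1 + A \<omega>)\<^sup>2"

lemma D_meas[measurable]: "D \<in> borel_measurable M"
  unfolding D_def by measurable

lemma int_D: "integrable M D"
proof -
  have "D \<omega> = 1 + 2 * A \<omega> + (A \<omega>)\<^sup>2" for \<omega> by (simp add: D_def power2_eq_square algebra_simps)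
  then have eq: "D = (\<lambda>\<omega>. 1 + 2 * A \<omega> + (A \<omega>)\<^sup>2)" by auto
  show ?thesis unfolding eq
    by (intro Bochner_Integration.integrable_add integrable_mult_right int_A int_A2 integrable_const)
qed

lemma D_nonneg: "0 \<le> D \<omega>"
  unfolding D_def by simp

lemma z_bound: "\<bar>s + X \<omega> \<bullet> K\<bar> \<le> (1 + \<bar>s\<bar>) * ((1 + A \<omega>) * (1 + norm K))"
proof -
  have A0: "0 \<le> A \<omega>" by (rule A_nonneg)
  have p1: "1 \<le> (1 + A \<omega>) * (1 + norm K)" using A0
    by (metis add_increasing2 less_eq_real_def mult_1 mult_mono norm_ge_zero zero_less_one)
  have p2: "A \<omega> * norm K \<le> (1 + A \<omega>) * (1 + norm K)"
    using A0 by (intro mult_mono) auto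
  have "\<bar>s\<bar> \<le> \<bar>s\<bar> * ((1 + A \<omega>) * (1 + norm K))"
    using p1 by (metis abs_ge_zero mult.right_neutral mult_left_mono)
  moreover have "\<bar>s + X \<omega> \<bullet> K\<bar> \<le> \<bar>s\<bar> + A \<omega> * norm K"
    using inner_le[of \<omega> K] by linarith
  ultimately show ?thesis using p2 by (simp add: algebra_simps)
qed

lemma pl_bound1: "\<bar>pl a b (s + X \<omega> \<bullet> K)\<bar> \<le> ((\<bar>a\<bar> + \<bar>b\<bar> + 1) * (1 + \<bar>s\<bar>)) * ((1 + norm K)\<^sup>2 * D \<omega>)"
proof -
  let ?u = "(1 + A \<omega>) * (1 + norm K)"
  have A0: "0 \<le> A \<omega>" by (rule A_nonneg)
  have u1: "1 \<le> ?u" using A0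
    by (metis add_increasing2 less_eq_real_def mult_1 mult_mono norm_ge_zero zero_less_one)
  have uu: "?u \<le> (1 + norm K)\<^sup>2 * D \<omega>"
  proof -
    have "?u \<le> ?u * ?u" using u1 by (metis less_eq_real_def mult_le_cancel_left1 order.trans zero_le_one)
    then show ?thesis by (simp add: D_def power2_eq_square algebra_simps)
  qed
  have "\<bar>pl a b (s + X \<omega> \<bullet> K)\<bar> \<le> (\<bar>a\<bar> + \<bar>b\<bar>) * \<bar>s + X \<omega> \<bullet> K\<bar>" by (rule pl_abs)
  also have "\<dots> \<le> (\<bar>a\<bar> + \<bar>b\<bar> + 1) * \<bar>s + X \<omega> \<bullet> K\<bar>" by (simp add: algebra_simps)
  also have "\<dots> \<le> (\<bar>a\<bar> + \<bar>b\<bar> + 1) * ((1 + \<bar>s\<bar>) * ?u)"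
    by (intro mult_left_mono z_bound) auto
  also have "\<dots> \<le> (\<bar>a\<bar> + \<bar>b\<bar> + 1) * ((1 + \<bar>s\<bar>) * ((1 + norm K)\<^sup>2 * D \<omega>))"
    by (intro mult_left_mono uu) auto
  finally show ?thesis by (simp add: algebra_simps)
qed

lemma pl_bound2: "\<bar>(pl a b (s + X \<omega> \<bullet> K))\<^sup>2\<bar> \<le> ((\<bar>a\<bar> + \<bar>b\<bar> + 1) * (1 + \<bar>s\<bar>))\<^sup>2 * ((1 + norm K)\<^sup>2 * D \<omega>)"
proof -
  have "\<bar>pl a b (s + X \<omega> \<bullet> K)\<bar> \<le> (\<bar>a\<bar> + \<bar>b\<bar>) * \<bar>s + X \<omega> \<bullet> K\<bar>" by (rule pl_abs)
  also have "\<dots> \<le> (\<bar>a\<bar> + \<bar>b\<bar> + 1) * \<bar>s + X \<omega> \<bullet> K\<bar>" by (simp add: algebra_simps)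
  also have "\<dots> \<le> (\<bar>a\<bar> + \<bar>b\<bar> + 1) * ((1 + \<bar>s\<bar>) * ((1 + A \<omega>) * (1 + norm K)))"
    by (intro mult_left_mono z_bound) auto
  finally have "\<bar>pl a b (s + X \<omega> \<bullet> K)\<bar>\<^sup>2 \<le> ((\<bar>a\<bar> + \<bar>b\<bar> + 1) * ((1 + \<bar>s\<bar>) * ((1 + A \<omega>) * (1 + norm K))))\<^sup>2"
    by (intro power_mono) auto
  also have "\<dots> = ((\<bar>a\<bar> + \<bar>b\<bar> + 1) * (1 + \<bar>s\<bar>))\<^sup>2 * ((1 + norm K)\<^sup>2 * D \<omega>)"
    by (simp only: D_def power_mult_distrib mult_ac)
  finally show ?thesis by simp
qed

lemma int_pl: "integrable M (\<lambda>\<omega>. pl a b (s + X \<omega> \<bullet> K))"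
  by (rule Bochner_Integration.integrable_bound[where f="\<lambda>\<omega>. ((\<bar>a\<bar> + \<bar>b\<bar> + 1) * (1 + \<bar>s\<bar>)) * ((1 + norm K)\<^sup>2 * D \<omega>)"])
    (auto intro!: integrable_mult_right int_D AE_I2 order_trans[OF pl_bound1] simp: abs_mult D_nonneg)

lemma int_pl2: "integrable M (\<lambda>\<omega>. (pl a b (s + X \<omega> \<bullet> K))\<^sup>2)"
  by (rule Bochner_Integration.integrable_bound[where f="\<lambda>\<omega>. ((\<bar>a\<bar> + \<bar>b\<bar> + 1) * (1 + \<bar>s\<bar>))\<^sup>2 * ((1 + norm K)\<^sup>2 * D \<omega>)"])
    (auto intro!: integrable_mult_right int_D AE_I2 simp: D_nonneg abs_mult order_trans[OF abs_ge_self pl_bound2])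

lemma cont_pl: "continuous_on UNIV (\<lambda>K. integral\<^sup>L M (\<lambda>\<omega>. pl a b (s + X \<omega> \<bullet> K)))"
proof (rule cont_param_integral[where D="\<lambda>\<omega>. ((\<bar>a\<bar> + \<bar>b\<bar> + 1) * (1 + \<bar>s\<bar>)) * D \<omega>"])
  show "continuous_on UNIV (\<lambda>K. pl a b (s + X \<omega> \<bullet> K))" for \<omega>
    by (intro continuous_on_compose2[OF pl_cont] continuous_intros) auto
next
  show "\<bar>pl a b (s + X \<omega> \<bullet> K)\<bar> \<le> (1 + norm K)\<^sup>2 * (((\<bar>a\<bar> + \<bar>b\<bar> + 1) * (1 + \<bar>s\<bar>)) * D \<omega>)" for K \<omega>
    using pl_bound1[of a b s \<omega> K] by (simp add: mult_ac)
qed (auto intro!: integrable_mult_right int_D)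

lemma cont_pl2: "continuous_on UNIV (\<lambda>K. integral\<^sup>L M (\<lambda>\<omega>. (pl a b (s + X \<omega> \<bullet> K))\<^sup>2))"
proof (rule cont_param_integral[where D="\<lambda>\<omega>. ((\<bar>a\<bar> + \<bar>b\<bar> + 1) * (1 + \<bar>s\<bar>))\<^sup>2 * D \<omega>"])
  show "continuous_on UNIV (\<lambda>K. (pl a b (s + X \<omega> \<bullet> K))\<^sup>2)" for \<omega>
    by (intro continuous_on_compose2[OF pl_cont] continuous_intros) auto
next
  show "\<bar>(pl a b (s + X \<omega> \<bullet> K))\<^sup>2\<bar> \<le> (1 + norm K)\<^sup>2 * (((\<bar>a\<bar> + \<bar>b\<bar> + 1) * (1 + \<bar>s\<bar>))\<^sup>2 * D \<omega>)" for K \<omega>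
    using pl_bound2[of a b s \<omega> K] by (simp add: algebra_simps)
qed (auto intro!: integrable_mult_right int_D)

definition G :: "real \<Rightarrow> real \<Rightarrow> real \<Rightarrow> real \<Rightarrow> real \<Rightarrow> real \<Rightarrow> real^'n \<Rightarrow> real" where
  "G a b c d s g K = var M (\<lambda>\<omega>. pl a b (s + X \<omega> \<bullet> K))
     + integral\<^sup>L M (\<lambda>\<omega>. (pl c d (s + X \<omega> \<bullet> K))\<^sup>2)
     - g * integral\<^sup>L M (\<lambda>\<omega>. pl a b (s + X \<omega> \<bullet> K))"

lemma G_alt: "G a b c d s g K = integral\<^sup>L M (\<lambda>\<omega>. (pl a b (s + X \<omega> \<bullet> K))\<^sup>2) - (integral\<^sup>L M (\<lambda>\<omega>. pl a b (s + X \<omega> \<bullet> K)))\<^sup>2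
     + integral\<^sup>L M (\<lambda>\<omega>. (pl c d (s + X \<omega> \<bullet> K))\<^sup>2)
     - g * integral\<^sup>L M (\<lambda>\<omega>. pl a b (s + X \<omega> \<bullet> K))"
  unfolding G_def by (subst var_eq_prob[OF prob_space_axioms int_pl int_pl2]) simp

lemma G_cont: "continuous_on UNIV (G a b c d s g)"
  unfolding G_alt[abs_def] by (intro continuous_intros cont_pl cont_pl2)

end


lemma var_scale: "var M (\<lambda>\<omega>. t * h \<omega>) = t\<^sup>2 * var M h"
proof -
  have "(t * h \<omega> - t * integral\<^sup>L M h)\<^sup>2 = t\<^sup>2 * (h \<omega> - integral\<^sup>L M h)\<^sup>2" for \<omega>
    by (simp add: power2_eq_square algebra_simps)
  then show ?thesis unfolding var_def integral_mult_right_zero by simp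
qed

lemma sq_sum_le: "(x + y)\<^sup>2 \<le> 2 * x\<^sup>2 + 2 * (y::real)\<^sup>2"
proof -
  have "0 \<le> (x - y)\<^sup>2" by simp
  then show ?thesis by (simp add: power2_eq_square algebra_simps)
qed

context onevec
begin

lemma int_sq_shift: fixes f :: "'w \<Rightarrow> real" shows "integrable M f \<Longrightarrow> integrable M (\<lambda>\<omega>. (f \<omega>)\<^sup>2) \<Longrightarrow> integrable M (\<lambda>\<omega>. (f \<omega> - c)\<^sup>2)"
proof -
  assume f: "integrable M f" "integrable M (\<lambda>\<omega>. (f \<omega>)\<^sup>2)"
  have "(\<lambda>\<omega>. (f \<omega> - c)\<^sup>2) = (\<lambda>\<omega>. (f \<omega>)\<^sup>2 - 2 * c * f \<omega> + c\<^sup>2)"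
    by (simp add: power2_eq_square algebra_simps)
  then show ?thesis using f by simp
qed

lemma var_le_shift:
  fixes f :: "'w \<Rightarrow> real"
  assumes f: "integrable M f" "integrable M (\<lambda>\<omega>. (f \<omega>)\<^sup>2)"
  shows "var M f \<le> integral\<^sup>L M (\<lambda>\<omega>. (f \<omega> - c)\<^sup>2)"
proof -
  have "(\<lambda>\<omega>. (f \<omega> - c)\<^sup>2) = (\<lambda>\<omega>. (f \<omega>)\<^sup>2 - 2 * c * f \<omega> + c\<^sup>2)"
    by (simp add: power2_eq_square algebra_simps)
  then have "integral\<^sup>L M (\<lambda>\<omega>. (f \<omega> - c)\<^sup>2) = integral\<^sup>L M (\<lambda>\<omega>. (f \<omega>)\<^sup>2) - 2 * c * integral\<^sup>L M f + c\<^sup>2"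
    using f by (simp add: prob_space)
  moreover have "var M f = integral\<^sup>L M (\<lambda>\<omega>. (f \<omega>)\<^sup>2) - (integral\<^sup>L M f)\<^sup>2"
    by (rule var_eq_prob[OF prob_space_axioms f])
  moreover have "0 \<le> (integral\<^sup>L M f - c)\<^sup>2" by simp
  ultimately show ?thesis by (simp add: power2_eq_square algebra_simps)
qed

lemma G0_def: "G a b c d 0 0 K = var M (\<lambda>\<omega>. pl a b (X \<omega> \<bullet> K)) + integral\<^sup>L M (\<lambda>\<omega>. (pl c d (X \<omega> \<bullet> K))\<^sup>2)"
  by (simp add: G_def)

lemma int_pl0: "integrable M (\<lambda>\<omega>. pl a b (X \<omega> \<bullet> K))"
  using int_pl[of a b 0 K] by simp

lemma int_pl20: "integrable M (\<lambda>\<omega>. (pl a b (X \<omega> \<bullet> K))\<^sup>2)"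
  using int_pl2[of a b 0 K] by simp

lemma G0_nonneg: "0 \<le> G a b c d 0 0 K"
  unfolding G0_def by (intro add_nonneg_nonneg var_nonneg integral_nonneg_AE) auto

lemma G_hom: "t \<ge> 0 \<Longrightarrow> G a b c d 0 0 (t *\<^sub>R L) = t\<^sup>2 * G a b c d 0 0 L"
proof -
  assume t: "t \<ge> 0"
  have e: "pl a b (X \<omega> \<bullet> (t *\<^sub>R L)) = t * pl a b (X \<omega> \<bullet> L)" for a b \<omega>
    using pl_hom[OF t] by simp
  show ?thesis unfolding G0_def e var_scale
    by (simp add: power_mult_distrib algebra_simps)
qed

lemma G_lower:
  "G a b c d s g K \<ge> G a b c d 0 0 K / 2
     - (((\<bar>a\<bar>+\<bar>b\<bar>)\<^sup>2 + (\<bar>c\<bar>+\<bar>d\<bar>)\<^sup>2) * s\<^sup>2 + \<bar>g\<bar> * (\<bar>a\<bar>+\<bar>b\<bar>) * \<bar>s\<bar>)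
     - \<bar>g\<bar> * (\<bar>a\<bar>+\<bar>b\<bar>) * integral\<^sup>L M A * norm K"
proof -
  define Ca where "Ca = \<bar>a\<bar>+\<bar>b\<bar>"
  define Cc where "Cc = \<bar>c\<bar>+\<bar>d\<bar>"
  define U where "U = (\<lambda>\<omega>. pl a b (X \<omega> \<bullet> K))"
  define V where "V = (\<lambda>\<omega>. pl a b (s + X \<omega> \<bullet> K))"
  define W0 where "W0 = (\<lambda>\<omega>. pl c d (X \<omega> \<bullet> K))"
  define W1 where "W1 = (\<lambda>\<omega>. pl c d (s + X \<omega> \<bullet> K))"
  have Ca0: "0 \<le> Ca" "0 \<le> Cc" by (auto simp: Ca_def Cc_def)
  have iU: "integrable M U" "integrable M (\<lambda>\<omega>. (U \<omega>)\<^sup>2)" unfolding U_def by (rule int_pl0 int_pl20)+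
  have iV: "integrable M V" "integrable M (\<lambda>\<omega>. (V \<omega>)\<^sup>2)" unfolding V_def by (rule int_pl int_pl2)+
  have iW: "integrable M (\<lambda>\<omega>. (W0 \<omega>)\<^sup>2)" "integrable M (\<lambda>\<omega>. (W1 \<omega>)\<^sup>2)"
    unfolding W0_def W1_def by (rule int_pl20 int_pl2)+
  have dUV: "\<bar>V \<omega> - U \<omega>\<bar> \<le> Ca * \<bar>s\<bar>" for \<omega>
    using pl_lip[of a b "s + X \<omega> \<bullet> K" "X \<omega> \<bullet> K"] by (simp add: U_def V_def Ca_def)
  have dW: "\<bar>W1 \<omega> - W0 \<omega>\<bar> \<le> Cc * \<bar>s\<bar>" for \<omega>
    using pl_lip[of c d "s + X \<omega> \<bullet> K" "X \<omega> \<bullet> K"] by (simp add: W0_def W1_def Cc_def)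
  let ?m = "integral\<^sup>L M V"
  have pw1: "(U \<omega> - ?m)\<^sup>2 \<le> 2 * (V \<omega> - ?m)\<^sup>2 + 2 * (Ca * \<bar>s\<bar>)\<^sup>2" for \<omega>
  proof -
    have "(U \<omega> - ?m)\<^sup>2 = ((V \<omega> - ?m) + (U \<omega> - V \<omega>))\<^sup>2" by simp
    also have "\<dots> \<le> 2 * (V \<omega> - ?m)\<^sup>2 + 2 * (U \<omega> - V \<omega>)\<^sup>2" by (rule sq_sum_le)
    also have "(U \<omega> - V \<omega>)\<^sup>2 \<le> (Ca * \<bar>s\<bar>)\<^sup>2"
      using dUV[of \<omega>] by (metis abs_minus_commute abs_ge_zero power2_abs power_mono)
    finally show ?thesis by simp
  qed
  have v1: "var M U \<le> 2 * var M V + 2 * (Ca * \<bar>s\<bar>)\<^sup>2"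
  proof -
    have "var M U \<le> integral\<^sup>L M (\<lambda>\<omega>. (U \<omega> - ?m)\<^sup>2)" by (rule var_le_shift[OF iU])
    also have "\<dots> \<le> integral\<^sup>L M (\<lambda>\<omega>. 2 * (V \<omega> - ?m)\<^sup>2 + 2 * (Ca * \<bar>s\<bar>)\<^sup>2)"
      by (intro integral_mono int_sq_shift iU iV pw1 Bochner_Integration.integrable_add integrable_mult_right integrable_const)
    also have "\<dots> = 2 * var M V + 2 * (Ca * \<bar>s\<bar>)\<^sup>2"
      using int_sq_shift[OF iV, of ?m] by (simp add: var_def prob_space)
    finally show ?thesis .
  qed
  have pw2: "(W0 \<omega>)\<^sup>2 \<le> 2 * (W1 \<omega>)\<^sup>2 + 2 * (Cc * \<bar>s\<bar>)\<^sup>2" for \<omega>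
  proof -
    have "(W0 \<omega>)\<^sup>2 = (W1 \<omega> + (W0 \<omega> - W1 \<omega>))\<^sup>2" by simp
    also have "\<dots> \<le> 2 * (W1 \<omega>)\<^sup>2 + 2 * (W0 \<omega> - W1 \<omega>)\<^sup>2" by (rule sq_sum_le)
    also have "(W0 \<omega> - W1 \<omega>)\<^sup>2 \<le> (Cc * \<bar>s\<bar>)\<^sup>2"
      using dW[of \<omega>] by (metis abs_minus_commute abs_ge_zero power2_abs power_mono)
    finally show ?thesis by simp
  qed
  have v2: "integral\<^sup>L M (\<lambda>\<omega>. (W0 \<omega>)\<^sup>2) \<le> 2 * integral\<^sup>L M (\<lambda>\<omega>. (W1 \<omega>)\<^sup>2) + 2 * (Cc * \<bar>s\<bar>)\<^sup>2"
  proof -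
    have "integral\<^sup>L M (\<lambda>\<omega>. (W0 \<omega>)\<^sup>2) \<le> integral\<^sup>L M (\<lambda>\<omega>. 2 * (W1 \<omega>)\<^sup>2 + 2 * (Cc * \<bar>s\<bar>)\<^sup>2)"
      by (intro integral_mono iW pw2 Bochner_Integration.integrable_add integrable_mult_right integrable_const)
    then show ?thesis using iW by (simp add: prob_space)
  qed
  have pw3: "\<bar>V \<omega>\<bar> \<le> Ca * \<bar>s\<bar> + Ca * norm K * A \<omega>" for \<omega>
  proof -
    have "\<bar>V \<omega>\<bar> \<le> Ca * \<bar>s + X \<omega> \<bullet> K\<bar>" unfolding V_def Ca_def by (rule pl_abs)
    also have "\<dots> \<le> Ca * (\<bar>s\<bar> + A \<omega> * norm K)"
      using inner_le[of \<omega> K] Ca0 by (intro mult_left_mono) auto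
    finally show ?thesis by (simp add: algebra_simps)
  qed
  have v3: "\<bar>integral\<^sup>L M V\<bar> \<le> Ca * \<bar>s\<bar> + Ca * norm K * integral\<^sup>L M A"
  proof -
    have "\<bar>integral\<^sup>L M V\<bar> \<le> integral\<^sup>L M (\<lambda>\<omega>. \<bar>V \<omega>\<bar>)" by (rule integral_abs_bound)
    also have "\<dots> \<le> integral\<^sup>L M (\<lambda>\<omega>. Ca * \<bar>s\<bar> + Ca * norm K * A \<omega>)"
      by (intro integral_mono integrable_abs iV pw3 Bochner_Integration.integrable_add integrable_mult_right integrable_const int_A)
    also have "\<dots> = Ca * \<bar>s\<bar> + Ca * norm K * integral\<^sup>L M A"
      using int_A by (simp add: prob_space)
    finally show ?thesis .
  qed
  have v4: "g * integral\<^sup>L M V \<le> \<bar>g\<bar> * (Ca * \<bar>s\<bar> + Ca * norm K * integral\<^sup>L M A)"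
  proof -
    have "g * integral\<^sup>L M V \<le> \<bar>g\<bar> * \<bar>integral\<^sup>L M V\<bar>" by (metis abs_ge_self abs_mult)
    also have "\<dots> \<le> \<bar>g\<bar> * (Ca * \<bar>s\<bar> + Ca * norm K * integral\<^sup>L M A)"
      using v3 by (intro mult_left_mono) auto
    finally show ?thesis .
  qed
  have G0e: "G a b c d 0 0 K = var M U + integral\<^sup>L M (\<lambda>\<omega>. (W0 \<omega>)\<^sup>2)"
    unfolding G0_def U_def W0_def ..
  have Ge: "G a b c d s g K = var M V + integral\<^sup>L M (\<lambda>\<omega>. (W1 \<omega>)\<^sup>2) - g * integral\<^sup>L M V"
    unfolding G_def V_def W1_def ..
  have f1: "G a b c d 0 0 K / 2 \<le> var M V + integral\<^sup>L M (\<lambda>\<omega>. (W1 \<omega>)\<^sup>2) + (Ca * \<bar>s\<bar>)\<^sup>2 + (Cc * \<bar>s\<bar>)\<^sup>2"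
    unfolding G0e using add_mono[OF v1 v2] by (simp add: field_simps)
  have f2: "(Ca * \<bar>s\<bar>)\<^sup>2 + (Cc * \<bar>s\<bar>)\<^sup>2 = ((\<bar>a\<bar>+\<bar>b\<bar>)\<^sup>2 + (\<bar>c\<bar>+\<bar>d\<bar>)\<^sup>2) * s\<^sup>2"
    by (simp only: Ca_def Cc_def power_mult_distrib power2_abs) (simp add: algebra_simps)
  have f3: "\<bar>g\<bar> * (Ca * \<bar>s\<bar> + Ca * norm K * integral\<^sup>L M A) = \<bar>g\<bar> * (\<bar>a\<bar>+\<bar>b\<bar>) * \<bar>s\<bar> + \<bar>g\<bar> * (\<bar>a\<bar>+\<bar>b\<bar>) * integral\<^sup>L M A * norm K"
    by (simp add: Ca_def algebra_simps)
  show ?thesis unfolding Ge using f1 f2 f3 v4 by linarith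
qed

end


locale onevec2 = onevec M X for M :: "'w measure" and X :: "'w \<Rightarrow> real^'n" +
  assumes no_arb: "\<And>L. L \<noteq> 0 \<Longrightarrow> \<not> (AE \<omega> in M. X \<omega> \<bullet> L \<le> 0) \<and> \<not> (AE \<omega> in M. X \<omega> \<bullet> L \<ge> 0)"
    and abs_cont: "absolutely_continuous lborel (distr M lborel X)"
begin

lemma no_atom: fixes L :: "real^'n" assumes L: "L \<noteq> 0" shows "AE \<omega> in M. X \<omega> \<bullet> L \<noteq> c"
proof -
  let ?H = "{x::real^'n. L \<bullet> x = c}"
  have "negligible ?H" using negligible_hyperplane L by blast
  then have "?H \<in> null_sets lebesgue" by (simp add: negligible_iff_null_sets)
  moreover have "?H \<in> sets lborel" using closed_hyperplane[of L c] by (simp add: borel_closed)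
  ultimately have "?H \<in> null_sets lborel" using null_sets_completion_iff by blast
  then have "?H \<in> null_sets (distr M lborel X)" using abs_cont unfolding absolutely_continuous_def by blast
  moreover have "X \<in> measurable M lborel" using Xm by simp
  ultimately have N: "X -` ?H \<inter> space M \<in> null_sets M" using null_sets_distr_iff by blast
  show ?thesis by (rule AE_I'[OF N]) (auto simp: inner_commute)
qed

lemma G0_pos:
  fixes L :: "real^'n"
  assumes nd: "a \<noteq> 0 \<or> b \<noteq> 0 \<or> c \<noteq> 0 \<or> d \<noteq> 0" and L: "L \<noteq> 0"
  shows "0 < G a b c d 0 0 L"
proof (rule ccontr)
  assume "\<not> 0 < G a b c d 0 0 L"
  then have le: "var M (\<lambda>\<omega>. pl a b (X \<omega> \<bullet> L)) + integral\<^sup>L M (\<lambda>\<omega>. (pl c d (X \<omega> \<bullet> L))\<^sup>2) \<le> 0"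
    unfolding G0_def by simp
  have n1: "0 \<le> var M (\<lambda>\<omega>. pl a b (X \<omega> \<bullet> L))" by (rule var_nonneg)
  have n2: "0 \<le> integral\<^sup>L M (\<lambda>\<omega>. (pl c d (X \<omega> \<bullet> L))\<^sup>2)" by (rule integral_nonneg_AE) auto
  have v0: "var M (\<lambda>\<omega>. pl a b (X \<omega> \<bullet> L)) = 0" and w0: "integral\<^sup>L M (\<lambda>\<omega>. (pl c d (X \<omega> \<bullet> L))\<^sup>2) = 0"
    using le n1 n2 by linarith+
  have AEw: "AE \<omega> in M. pl c d (X \<omega> \<bullet> L) = 0"
  proof -
    have "AE \<omega> in M. (pl c d (X \<omega> \<bullet> L))\<^sup>2 = 0"
      using w0 integral_nonneg_eq_0_iff_AE[OF int_pl20] by auto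
    then show ?thesis by auto
  qed
  define k where "k = integral\<^sup>L M (\<lambda>\<omega>. pl a b (X \<omega> \<bullet> L))"
  have AEv: "AE \<omega> in M. pl a b (X \<omega> \<bullet> L) = k"
  proof -
    have "AE \<omega> in M. (pl a b (X \<omega> \<bullet> L) - k)\<^sup>2 = 0"
      using v0 integral_nonneg_eq_0_iff_AE[OF int_sq_shift[OF int_pl0 int_pl20]] unfolding var_def k_def by auto
    then show ?thesis by auto
  qed
  have na: "\<not> (AE \<omega> in M. X \<omega> \<bullet> L \<le> 0)" "\<not> (AE \<omega> in M. X \<omega> \<bullet> L \<ge> 0)" using no_arb[OF L] by auto
  show False
  proof -
    { assume c: "c \<noteq> 0"
      have "AE \<omega> in M. X \<omega> \<bullet> L \<le> 0" using AEw
      proof eventually_elim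
        case (elim \<omega>) then show ?case using c by (auto simp: pl_if split: if_splits)
      qed
      then have False using na by simp }
    moreover
    { assume d: "d \<noteq> 0"
      have "AE \<omega> in M. X \<omega> \<bullet> L \<ge> 0" using AEw
      proof eventually_elim
        case (elim \<omega>) then show ?case using d by (auto simp: pl_if split: if_splits)
      qed
      then have False using na by simp }
    moreover
    { assume a: "a \<noteq> 0"
      have "AE \<omega> in M. X \<omega> \<bullet> L \<le> 0" using AEv no_atom[OF L, of "k / a"]
      proof eventually_elim
        case (elim \<omega>) then show ?case using a by (auto simp: pl_if field_simps split: if_splits)
      qed
      then have False using na by simp }
    moreover
    { assume b: "b \<noteq> 0"
      have "AE \<omega> in M. X \<omega> \<bullet> L \<ge> 0" using AEv no_atom[OF L, of "k / b"]
      proof eventually_elim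
        case (elim \<omega>) then show ?case using b by (auto simp: pl_if field_simps split: if_splits)
      qed
      then have False using na by simp }
    ultimately show False using nd by blast
  qed
qed

lemma G_min: "\<exists>K. \<forall>K'. G a b c d s g K \<le> G a b c d s g K'"
proof (cases "a = 0 \<and> b = 0 \<and> c = 0 \<and> d = 0")
  case True
  then have "\<And>K. G a b c d s g K = 0" by (simp add: G_def pl_zero var_def)
  then show ?thesis by auto
next
  case False
  then have nd: "a \<noteq> 0 \<or> b \<noteq> 0 \<or> c \<noteq> 0 \<or> d \<noteq> 0" by blast
  let ?S = "sphere (0::real^'n) 1"
  obtain L0 :: "real^'n" where "norm L0 = 1" using vector_choose_size[of 1] by auto
  then have Sne: "?S \<noteq> {}" by auto
  have cS: "continuous_on ?S (G a b c d 0 0)" using G_cont continuous_on_subset by blast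
  obtain Lm where Lm: "Lm \<in> ?S" "\<And>L. L \<in> ?S \<Longrightarrow> G a b c d 0 0 Lm \<le> G a b c d 0 0 L"
    using continuous_attains_inf[OF compact_sphere Sne cS] by blast
  define m where "m = G a b c d 0 0 Lm"
  have m0: "0 < m" unfolding m_def using Lm(1) by (intro G0_pos nd) auto
  have Qlow: "m * (norm K)\<^sup>2 \<le> G a b c d 0 0 K" for K
  proof (cases "K = 0")
    case True then show ?thesis using G0_nonneg by simp
  next
    case False
    let ?L = "inverse (norm K) *\<^sub>R K"
    have LS: "?L \<in> ?S" using False by simp
    have "K = norm K *\<^sub>R ?L" using False by simp
    then have "G a b c d 0 0 K = (norm K)\<^sup>2 * G a b c d 0 0 ?L"
      by (metis G_hom norm_ge_zero)
    moreover have "m \<le> G a b c d 0 0 ?L" unfolding m_def by (rule Lm(2)[OF LS])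
    ultimately show ?thesis by (metis mult.commute mult_right_mono zero_le_power2)
  qed
  define c0 where "c0 = ((\<bar>a\<bar>+\<bar>b\<bar>)\<^sup>2 + (\<bar>c\<bar>+\<bar>d\<bar>)\<^sup>2) * s\<^sup>2 + \<bar>g\<bar> * (\<bar>a\<bar>+\<bar>b\<bar>) * \<bar>s\<bar>"
  define c1 where "c1 = \<bar>g\<bar> * (\<bar>a\<bar>+\<bar>b\<bar>) * integral\<^sup>L M A"
  have c0: "0 \<le> c0" unfolding c0_def by simp
  have c1: "0 \<le> c1" unfolding c1_def using A_nonneg by (simp add: integral_nonneg_AE)
  have Glow: "m / 2 * (norm K)\<^sup>2 - c0 - c1 * norm K \<le> G a b c d s g K" for K
    using G_lower[of a b c d K s g] Qlow[of K] unfolding c0_def c1_def by linarith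
  define G00 where "G00 = G a b c d s g 0"
  define R where "R = max 1 (2 * (c0 + c1 + \<bar>G00\<bar> + 1) / m)"
  have far: "G00 < G a b c d s g K" if K: "R < norm K" for K
  proof -
    define r where "r = norm K"
    have r1: "1 \<le> r" using K unfolding R_def r_def by linarith
    have "2 * (c0 + c1 + \<bar>G00\<bar> + 1) / m < r" using K unfolding R_def r_def by linarith
    then have r2: "c0 + c1 + \<bar>G00\<bar> + 1 < m * r / 2" using m0 by (simp add: field_simps)
    have h1: "c0 \<le> c0 * r" using c0 r1 by (metis mult_left_mono mult.right_neutral)
    have h2: "m / 2 * r\<^sup>2 = r * (m * r / 2)" by (simp add: power2_eq_square)
    have h3: "r * (\<bar>G00\<bar> + 1) \<le> r * (m * r / 2 - c0 - c1)" using r1 r2 by (intro mult_left_mono) auto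
    have h4: "\<bar>G00\<bar> + 1 \<le> r * (\<bar>G00\<bar> + 1)" using r1 mult_right_mono[OF r1, of "\<bar>G00\<bar> + 1"] by simp
    have "m / 2 * r\<^sup>2 - c0 - c1 * r \<le> G a b c d s g K" using Glow[of K] unfolding r_def .
    moreover have h3': "r * \<bar>G00\<bar> + r \<le> r * (m * r / 2) - c0 * r - c1 * r"
      using h3 by (simp add: algebra_simps)
    moreover have h4': "\<bar>G00\<bar> + 1 \<le> r * \<bar>G00\<bar> + r" using h4 by (simp add: algebra_simps)
    ultimately show ?thesis using h1 h2 by linarith
  qed
  have cB: "continuous_on (cball 0 R) (G a b c d s g)" using G_cont continuous_on_subset by blast
  have R0: "0 \<le> R" unfolding R_def by simp
  then have Bne: "cball (0::real^'n) R \<noteq> {}" by (metis centre_in_cball empty_iff)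
  obtain Km where Km: "Km \<in> cball 0 R" "\<And>K. K \<in> cball 0 R \<Longrightarrow> G a b c d s g Km \<le> G a b c d s g K"
    using continuous_attains_inf[OF compact_cball Bne cB] by blast
  have "G a b c d s g Km \<le> G a b c d s g K" for K
  proof (cases "norm K \<le> R")
    case True then show ?thesis using Km(2) by simp
  next
    case False
    have "G a b c d s g Km \<le> G00" unfolding G00_def using Km(2) R0 by simp
    also have "\<dots> < G a b c d s g K" using far False by simp
    finally show ?thesis by simp
  qed
  then show ?thesis by blast
qed

end


lemma rho_T[simp]: "rho s T T = 1" by (simp add: rho_def)

lemma rho_step: "t < T \<Longrightarrow> rho s T t = s t * rho s T (Suc t)"
  unfolding rho_def by (simp add: prod.atLeast_Suc_lessThan)

lemma rho_pos: "(\<And>j. j < T \<Longrightarrow> 0 < s j) \<Longrightarrow> 0 < rho s T t"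
  unfolding rho_def by (intro prod_pos) auto

fun HH :: "(nat \<Rightarrow> real) \<Rightarrow> nat \<Rightarrow> (nat \<Rightarrow> real^'n) \<Rightarrow> (nat \<Rightarrow> real^'n) \<Rightarrow> nat
    \<Rightarrow> (nat \<Rightarrow> real^'n) \<Rightarrow> real \<times> real" where
  "HH s T Kp Km 0 Q = (0, 0)"
| "HH s T Kp Km (Suc k) Q = (let t = T - Suc k; r = rho s T (Suc t); H = HH s T Kp Km k Q in
    (r * (Q t \<bullet> Kp t) + pl (fst H) (snd H) (s t + Q t \<bullet> Kp t),
     r * (Q t \<bullet> Km t) + pl (snd H) (fst H) (s t + Q t \<bullet> Km t)))"

lemma wealth_hom:
  assumes spos: "\<And>j. j < T \<Longrightarrow> 0 < s j"
  shows "t + k = T \<Longrightarrow> wealth s P (tc_policy s T W Kp Km) t k x \<omega>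
     = rho s T t * x + pl (fst (HH s T Kp Km k (\<lambda>i. P i \<omega>))) (snd (HH s T Kp Km k (\<lambda>i. P i \<omega>))) (x - W / rho s T t)"
proof (induction k arbitrary: t x)
  case 0
  then show ?case by (simp add: pl_zero)
next
  case (Suc k)
  then have tT: "t < T" and tk: "T - Suc k = t" and tk': "Suc t + k = T" by auto
  define Q where "Q = (\<lambda>i. P i \<omega>)"
  define H' where "H' = HH s T Kp Km k Q"
  define h1 where "h1 = fst H'"
  define h2 where "h2 = snd H'"
  define rh where "rh = rho s T t"
  define rh' where "rh' = rho s T (Suc t)"
  define c where "c = W / rh"
  define c' where "c' = W / rh'"
  define d where "d = x - c"
  have st: "0 < s t" using spos tT by simp
  have rh': "0 < rh'" unfolding rh'_def by (rule rho_pos[OF spos])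
  have rhe: "rh = s t * rh'" unfolding rh_def rh'_def by (rule rho_step[OF tT])
  have cc: "s t * c = c'" unfolding c_def c'_def rhe using st rh' by (simp add: field_simps)
  have H: "HH s T Kp Km (Suc k) Q = (rh' * (Q t \<bullet> Kp t) + pl h1 h2 (s t + Q t \<bullet> Kp t),
     rh' * (Q t \<bullet> Km t) + pl h2 h1 (s t + Q t \<bullet> Km t))"
    by (simp add: tk rh'_def h1_def h2_def H'_def Let_def)
  define y where "y = s t * x + P t \<omega> \<bullet> tc_policy s T W Kp Km t x"
  have "wealth s P (tc_policy s T W Kp Km) t (Suc k) x \<omega> = wealth s P (tc_policy s T W Kp Km) (Suc t) k y \<omega>"
    by (simp add: y_def)
  also have "\<dots> = rh' * y + pl h1 h2 (y - c')"
    using Suc.IH[OF tk'] unfolding rh'_def c'_def h1_def h2_def H'_def Q_def by simp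
  also have "\<dots> = rh * x + pl (fst (HH s T Kp Km (Suc k) Q)) (snd (HH s T Kp Km (Suc k) Q)) d"
  proof (cases "d \<ge> 0")
    case True
    then have u: "tc_policy s T W Kp Km t x = d *\<^sub>R Kp t"
      unfolding tc_policy_def d_def c_def rh_def by simp
    have ye: "y - c' = d * (s t + Q t \<bullet> Kp t)"
      unfolding y_def u Q_def using cc unfolding d_def by (simp add: algebra_simps)
    have "rh' * y + pl h1 h2 (y - c') = rh' * y + d * pl h1 h2 (s t + Q t \<bullet> Kp t)"
      unfolding ye using pl_hom[OF True] by simp
    also have "\<dots> = rh * x + d * (rh' * (Q t \<bullet> Kp t) + pl h1 h2 (s t + Q t \<bullet> Kp t))"
      unfolding y_def u rhe Q_def by (simp add: algebra_simps)
    also have "\<dots> = rh * x + pl (fst (HH s T Kp Km (Suc k) Q)) (snd (HH s T Kp Km (Suc k) Q)) d"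
      unfolding H using True by (simp add: pl_if mult.commute)
    finally show ?thesis .
  next
    case False
    then have u: "tc_policy s T W Kp Km t x = d *\<^sub>R Km t"
      unfolding tc_policy_def d_def c_def rh_def by simp
    have ye: "y - c' = d * (s t + Q t \<bullet> Km t)"
      unfolding y_def u Q_def using cc unfolding d_def by (simp add: algebra_simps)
    have dn: "d \<le> 0" using False by simp
    have "rh' * y + pl h1 h2 (y - c') = rh' * y + d * pl h2 h1 (s t + Q t \<bullet> Km t)"
      unfolding ye using pl_hom_neg[OF dn] by simp
    also have "\<dots> = rh * x + d * (rh' * (Q t \<bullet> Km t) + pl h2 h1 (s t + Q t \<bullet> Km t))"
      unfolding y_def u rhe Q_def by (simp add: algebra_simps)
    also have "\<dots> = rh * x + pl (fst (HH s T Kp Km (Suc k) Q)) (snd (HH s T Kp Km (Suc k) Q)) d"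
      unfolding H using False by (simp add: pl_if mult.commute)
    finally show ?thesis .
  qed
  finally show ?case unfolding Q_def d_def c_def rh_def by simp
qed


lemma pl_meas2[measurable (raw)]:
  "f \<in> borel_measurable N \<Longrightarrow> g \<in> borel_measurable N \<Longrightarrow> h \<in> borel_measurable N \<Longrightarrow>
   (\<lambda>x. pl (f x) (g x) (h x)) \<in> borel_measurable N"
  unfolding pl_def by (intro borel_measurable_add borel_measurable_times borel_measurable_max borel_measurable_min borel_measurable_const)

lemma HH_local:
  "k \<le> T \<Longrightarrow> (\<forall>i\<in>{T-k..<T}. Q i = Q' i) \<Longrightarrow> HH s T Kp Km k Q = HH s T Kp Km k Q'"
proof (induction k)
  case 0 then show ?case by simp
next
  case (Suc k)
  then have "T - Suc k \<in> {T - Suc k..<T}" by auto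
  then have "Q (T - Suc k) = Q' (T - Suc k)" using Suc.prems by blast
  moreover have "\<forall>i\<in>{T-k..<T}. Q i = Q' i" using Suc.prems(2) by auto
  then have "HH s T Kp Km k Q = HH s T Kp Km k Q'" using Suc.IH Suc.prems(1) by auto
  ultimately show ?case by (simp add: Let_def)
qed

lemma HH_meas:
  "k \<le> T \<Longrightarrow> {T-k..<T} \<subseteq> I \<Longrightarrow>
    (\<lambda>Q. fst (HH s T Kp Km k Q)) \<in> borel_measurable (PiM I (\<lambda>_. borel :: (real^'n) measure)) \<and>
    (\<lambda>Q. snd (HH s T Kp Km k Q)) \<in> borel_measurable (PiM I (\<lambda>_. borel :: (real^'n) measure))"
proof (induction k)
  case 0 then show ?case by simp
next
  case (Suc k)
  then have t: "T - Suc k \<in> I" by auto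
  have comp[measurable]: "(\<lambda>Q. Q (T - Suc k)) \<in> borel_measurable (PiM I (\<lambda>_. borel :: (real^'n) measure))"
    using measurable_component_singleton[OF t, of "\<lambda>_. borel"] by simp
  have "{T - k..<T} \<subseteq> {T - Suc k..<T}" by auto
  then have "{T - k..<T} \<subseteq> I" using Suc.prems by blast
  with Suc.IH Suc.prems(1) have ih[measurable]: "(\<lambda>Q. fst (HH s T Kp Km k Q)) \<in> borel_measurable (PiM I (\<lambda>_. borel :: (real^'n) measure))"
    "(\<lambda>Q. snd (HH s T Kp Km k Q)) \<in> borel_measurable (PiM I (\<lambda>_. borel :: (real^'n) measure))" by auto
  show ?case by (simp add: Let_def) measurable
qed

locale mp = prob_space M for M :: "'w measure" +
  fixes P :: "nat \<Rightarrow> 'w \<Rightarrow> real^'n" and s :: "nat \<Rightarrow> real" and T :: nat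
  assumes s_gt1: "\<And>t. t < T \<Longrightarrow> s t > 1"
    and meas: "\<And>t. t < T \<Longrightarrow> P t \<in> borel_measurable M"
    and indep: "indep_vars (\<lambda>_. borel) P {..<T}"
    and abs_cont: "\<And>t. t < T \<Longrightarrow> absolutely_continuous lborel (distr M lborel (P t))"
    and int1: "\<And>t i. t < T \<Longrightarrow> integrable M (\<lambda>\<omega>. P t \<omega> $ i)"
    and int2: "\<And>t i. t < T \<Longrightarrow> integrable M (\<lambda>\<omega>. (P t \<omega> $ i)\<^sup>2)"
    and no_arb: "\<And>t L. t < T \<Longrightarrow> L \<noteq> 0 \<Longrightarrow>
        \<not> (AE \<omega> in M. P t \<omega> \<bullet> L \<le> 0) \<and> \<not> (AE \<omega> in M. P t \<omega> \<bullet> L \<ge> 0)"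
begin

lemma spos: "j < T \<Longrightarrow> 0 < s j" using s_gt1[of j] by simp

lemma ov: "t < T \<Longrightarrow> onevec2 M (P t)"
  unfolding onevec2_def onevec_def onevec2_axioms_def onevec_axioms_def
  using prob_space_axioms meas int1 int2 no_arb abs_cont by auto

lemma indep_t:
  fixes F :: "real^'n \<Rightarrow> real" and g :: "(nat \<Rightarrow> real^'n) \<Rightarrow> real"
  assumes t: "t < T" and F: "F \<in> borel_measurable borel"
    and g: "g \<in> borel_measurable (PiM {Suc t..<T} (\<lambda>_. borel :: (real^'n) measure))"
  shows "indep_var borel (\<lambda>\<omega>. F (P t \<omega>)) borel (\<lambda>\<omega>. g (restrict (\<lambda>i. P i \<omega>) {Suc t..<T}))"
proof -
  define K where "K = (\<lambda>b::bool. if b then {t} else {Suc t..<T})"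
  have "indep_vars (\<lambda>j. PiM (K j) (\<lambda>_. borel :: (real^'n) measure)) (\<lambda>j \<omega>. restrict (\<lambda>i. P i \<omega>) (K j)) UNIV"
    by (rule indep_vars_restrict[OF indep]) (auto simp: K_def disjoint_family_on_def t)
  moreover have "(\<lambda>j. PiM (K j) (\<lambda>_. borel :: (real^'n) measure)) = case_bool (PiM {t} (\<lambda>_. borel)) (PiM {Suc t..<T} (\<lambda>_. borel))"
    by (auto simp: K_def fun_eq_iff split: bool.split)
  moreover have "(\<lambda>j \<omega>. restrict (\<lambda>i. P i \<omega>) (K j)) = case_bool (\<lambda>\<omega>. restrict (\<lambda>i. P i \<omega>) {t}) (\<lambda>\<omega>. restrict (\<lambda>i. P i \<omega>) {Suc t..<T})"
    by (auto simp: K_def fun_eq_iff split: bool.split)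
  ultimately have iv: "indep_var (PiM {t} (\<lambda>_. borel :: (real^'n) measure)) (\<lambda>\<omega>. restrict (\<lambda>i. P i \<omega>) {t})
      (PiM {Suc t..<T} (\<lambda>_. borel)) (\<lambda>\<omega>. restrict (\<lambda>i. P i \<omega>) {Suc t..<T})"
    unfolding indep_var_def by simp
  have m1: "(\<lambda>q. F (q t)) \<in> borel_measurable (PiM {t} (\<lambda>_. borel :: (real^'n) measure))"
    using measurable_compose[OF measurable_component_singleton[of t "{t}" "\<lambda>_. borel"] F] by simp
  from indep_var_compose[OF iv m1 g] show ?thesis by (simp add: comp_def)
qed

lemma factor:
  fixes F :: "real^'n \<Rightarrow> real" and g :: "(nat \<Rightarrow> real^'n) \<Rightarrow> real"
  assumes t: "t < T" and F: "F \<in> borel_measurable borel"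
    and g: "g \<in> borel_measurable (PiM {Suc t..<T} (\<lambda>_. borel :: (real^'n) measure))"
    and iF: "integrable M (\<lambda>\<omega>. F (P t \<omega>))"
    and ig: "integrable M (\<lambda>\<omega>. g (restrict (\<lambda>i. P i \<omega>) {Suc t..<T}))"
  shows "integrable M (\<lambda>\<omega>. F (P t \<omega>) * g (restrict (\<lambda>i. P i \<omega>) {Suc t..<T}))"
    and "integral\<^sup>L M (\<lambda>\<omega>. F (P t \<omega>) * g (restrict (\<lambda>i. P i \<omega>) {Suc t..<T}))
       = integral\<^sup>L M (\<lambda>\<omega>. F (P t \<omega>)) * integral\<^sup>L M (\<lambda>\<omega>. g (restrict (\<lambda>i. P i \<omega>) {Suc t..<T}))"
  using indep_var_integrable[OF indep_t[OF t F g] iF ig] indep_var_lebesgue_integral[OF indep_t[OF t F g] iF ig]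
  by auto

end


lemma int_mul:
  fixes f g :: "'a \<Rightarrow> real"
  assumes [measurable]: "f \<in> borel_measurable M" "g \<in> borel_measurable M"
    and "integrable M (\<lambda>x. (f x)\<^sup>2)" "integrable M (\<lambda>x. (g x)\<^sup>2)"
  shows "integrable M (\<lambda>x. f x * g x)"
  by (rule Bochner_Integration.integrable_bound[OF Bochner_Integration.integrable_add[OF assms(3,4)]])
     (auto intro!: AE_I2 order_trans[OF abs_prod_le])

lemma maxmin0: "max (z::real) 0 * min z 0 = 0" by (simp add: max_def min_def)

context mp
begin

lemma step_gen:
  fixes g1 g2 :: "(nat \<Rightarrow> real^'n) \<Rightarrow> real" and K :: "real^'n" and r :: real
  assumes n: "n < T"
    and g1[measurable]: "g1 \<in> borel_measurable (PiM {Suc n..<T} (\<lambda>_. borel :: (real^'n) measure))"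
    and g2[measurable]: "g2 \<in> borel_measurable (PiM {Suc n..<T} (\<lambda>_. borel :: (real^'n) measure))"
    and h1: "\<And>\<omega>. h1 \<omega> = g1 (restrict (\<lambda>i. P i \<omega>) {Suc n..<T})"
    and h2: "\<And>\<omega>. h2 \<omega> = g2 (restrict (\<lambda>i. P i \<omega>) {Suc n..<T})"
    and i1: "integrable M h1" "integrable M (\<lambda>\<omega>. (h1 \<omega>)\<^sup>2)"
    and i2: "integrable M h2" "integrable M (\<lambda>\<omega>. (h2 \<omega>)\<^sup>2)"
  defines "H \<equiv> (\<lambda>\<omega>. r * (P n \<omega> \<bullet> K) + pl (h1 \<omega>) (h2 \<omega>) (s n + P n \<omega> \<bullet> K))"
  shows "integrable M H" "integrable M (\<lambda>\<omega>. (H \<omega>)\<^sup>2)"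
    "integral\<^sup>L M H = r * (mean_vec M (P n) \<bullet> K) + integral\<^sup>L M h1 * integral\<^sup>L M (\<lambda>\<omega>. max (s n + P n \<omega> \<bullet> K) 0)
        + integral\<^sup>L M h2 * integral\<^sup>L M (\<lambda>\<omega>. min (s n + P n \<omega> \<bullet> K) 0)"
    "integral\<^sup>L M (\<lambda>\<omega>. (H \<omega>)\<^sup>2) = r\<^sup>2 * (K \<bullet> (second_moment M (P n) *v K))
        + 2 * r * integral\<^sup>L M h1 * integral\<^sup>L M (\<lambda>\<omega>. (P n \<omega> \<bullet> K) * max (s n + P n \<omega> \<bullet> K) 0)
        + 2 * r * integral\<^sup>L M h2 * integral\<^sup>L M (\<lambda>\<omega>. (P n \<omega> \<bullet> K) * min (s n + P n \<omega> \<bullet> K) 0)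
        + integral\<^sup>L M (\<lambda>\<omega>. (h1 \<omega>)\<^sup>2) * integral\<^sup>L M (\<lambda>\<omega>. (max (s n + P n \<omega> \<bullet> K) 0)\<^sup>2)
        + integral\<^sup>L M (\<lambda>\<omega>. (h2 \<omega>)\<^sup>2) * integral\<^sup>L M (\<lambda>\<omega>. (min (s n + P n \<omega> \<bullet> K) 0)\<^sup>2)"
proof -
  interpret X: onevec2 M "P n" using ov[OF n] .
  have Pm[measurable]: "P n \<in> borel_measurable M" using meas[OF n] .
  let ?R = "\<lambda>\<omega>. restrict (\<lambda>i. P i \<omega>) {Suc n..<T}"
  have mx: "max z 0 = pl 1 0 z" "min z 0 = pl 0 1 z" for z by (auto simp: pl_def)
  have iX: "integrable M (\<lambda>\<omega>. P n \<omega> \<bullet> K)" "integrable M (\<lambda>\<omega>. (P n \<omega> \<bullet> K)\<^sup>2)"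
    by (rule X.int_lin X.int_sq)+
  have iMx: "integrable M (\<lambda>\<omega>. max (s n + P n \<omega> \<bullet> K) 0)" "integrable M (\<lambda>\<omega>. (max (s n + P n \<omega> \<bullet> K) 0)\<^sup>2)"
    "integrable M (\<lambda>\<omega>. min (s n + P n \<omega> \<bullet> K) 0)" "integrable M (\<lambda>\<omega>. (min (s n + P n \<omega> \<bullet> K) 0)\<^sup>2)"
    unfolding mx by (rule X.int_pl X.int_pl2)+
  have iXM: "integrable M (\<lambda>\<omega>. (P n \<omega> \<bullet> K) * max (s n + P n \<omega> \<bullet> K) 0)"
     "integrable M (\<lambda>\<omega>. (P n \<omega> \<bullet> K) * min (s n + P n \<omega> \<bullet> K) 0)"
    by (intro int_mul iX iMx; measurable)+
  have fac: "integrable M (\<lambda>\<omega>. F (P n \<omega>) * h \<omega>) \<and> integral\<^sup>L M (\<lambda>\<omega>. F (P n \<omega>) * h \<omega>) = integral\<^sup>L M (\<lambda>\<omega>. F (P n \<omega>)) * integral\<^sup>L M h"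
    if F: "F \<in> borel_measurable borel" and iF: "integrable M (\<lambda>\<omega>. F (P n \<omega>))"
      and g: "g \<in> borel_measurable (PiM {Suc n..<T} (\<lambda>_. borel :: (real^'n) measure))"
      and h: "\<And>\<omega>. h \<omega> = g (?R \<omega>)" and ih: "integrable M h"
    for F :: "real^'n \<Rightarrow> real" and g :: "(nat \<Rightarrow> real^'n) \<Rightarrow> real" and h
  proof -
    have hh: "h = (\<lambda>\<omega>. g (?R \<omega>))" using h by auto
    show ?thesis using factor[OF n F g iF] ih unfolding hh by simp
  qed
  have gs1: "(\<lambda>Q. (g1 Q)\<^sup>2) \<in> borel_measurable (PiM {Suc n..<T} (\<lambda>_. borel :: (real^'n) measure))" by measurable
  have gs2: "(\<lambda>Q. (g2 Q)\<^sup>2) \<in> borel_measurable (PiM {Suc n..<T} (\<lambda>_. borel :: (real^'n) measure))" by measurable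
  have Fm1: "(\<lambda>q. max (s n + q \<bullet> K) 0) \<in> borel_measurable borel" by measurable
  have Fm2: "(\<lambda>q. min (s n + q \<bullet> K) 0) \<in> borel_measurable borel" by measurable
  have Fm3: "(\<lambda>q. (max (s n + q \<bullet> K) 0)\<^sup>2) \<in> borel_measurable borel" by measurable
  have Fm4: "(\<lambda>q. (min (s n + q \<bullet> K) 0)\<^sup>2) \<in> borel_measurable borel" by measurable
  have Fm5: "(\<lambda>q. (q \<bullet> K) * max (s n + q \<bullet> K) 0) \<in> borel_measurable borel" by measurable
  have Fm6: "(\<lambda>q. (q \<bullet> K) * min (s n + q \<bullet> K) 0) \<in> borel_measurable borel" by measurable
  note f1 = fac[OF Fm1 iMx(1) g1 h1 i1(1)]
  note f2 = fac[OF Fm2 iMx(3) g2 h2 i2(1)]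
  have h1s: "(h1 \<omega>)\<^sup>2 = (g1 (?R \<omega>))\<^sup>2" for \<omega> using h1 by simp
  have h2s: "(h2 \<omega>)\<^sup>2 = (g2 (?R \<omega>))\<^sup>2" for \<omega> using h2 by simp
  note f3 = fac[OF Fm3 iMx(2) gs1 h1s i1(2)]
  note f4 = fac[OF Fm4 iMx(4) gs2 h2s i2(2)]
  note f5 = fac[OF Fm5 iXM(1) g1 h1 i1(1)]
  note f6 = fac[OF Fm6 iXM(2) g2 h2 i2(1)]
  have He: "H \<omega> = r * (P n \<omega> \<bullet> K) + max (s n + P n \<omega> \<bullet> K) 0 * h1 \<omega> + min (s n + P n \<omega> \<bullet> K) 0 * h2 \<omega>" for \<omega>
    unfolding H_def pl_def by (simp add: mult.commute)
  have Hs: "(H \<omega>)\<^sup>2 = r\<^sup>2 * (P n \<omega> \<bullet> K)\<^sup>2 + (max (s n + P n \<omega> \<bullet> K) 0)\<^sup>2 * (h1 \<omega>)\<^sup>2 + (min (s n + P n \<omega> \<bullet> K) 0)\<^sup>2 * (h2 \<omega>)\<^sup>2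
      + 2 * r * ((P n \<omega> \<bullet> K) * max (s n + P n \<omega> \<bullet> K) 0 * h1 \<omega>) + 2 * r * ((P n \<omega> \<bullet> K) * min (s n + P n \<omega> \<bullet> K) 0 * h2 \<omega>)" for \<omega>
  proof -
    have mm: "max (s n + P n \<omega> \<bullet> K) 0 * min (s n + P n \<omega> \<bullet> K) 0 = 0" by (rule maxmin0)
    show ?thesis unfolding He power2_eq_square using mm by (simp add: algebra_simps)
  qed
  have HE: "H = (\<lambda>\<omega>. r * (P n \<omega> \<bullet> K) + max (s n + P n \<omega> \<bullet> K) 0 * h1 \<omega> + min (s n + P n \<omega> \<bullet> K) 0 * h2 \<omega>)"
    using He by auto
  have HSE: "(\<lambda>\<omega>. (H \<omega>)\<^sup>2) = (\<lambda>\<omega>. r\<^sup>2 * (P n \<omega> \<bullet> K)\<^sup>2 + (max (s n + P n \<omega> \<bullet> K) 0)\<^sup>2 * (h1 \<omega>)\<^sup>2 + (min (s n + P n \<omega> \<bullet> K) 0)\<^sup>2 * (h2 \<omega>)\<^sup>2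
      + 2 * r * ((P n \<omega> \<bullet> K) * max (s n + P n \<omega> \<bullet> K) 0 * h1 \<omega>) + 2 * r * ((P n \<omega> \<bullet> K) * min (s n + P n \<omega> \<bullet> K) 0 * h2 \<omega>))"
    using Hs by auto
  show "integrable M H" unfolding HE using f1 f2 iX by auto
  show "integrable M (\<lambda>\<omega>. (H \<omega>)\<^sup>2)" unfolding HSE using f3 f4 f5 f6 iX by auto
  show "integral\<^sup>L M H = r * (mean_vec M (P n) \<bullet> K) + integral\<^sup>L M h1 * integral\<^sup>L M (\<lambda>\<omega>. max (s n + P n \<omega> \<bullet> K) 0)
        + integral\<^sup>L M h2 * integral\<^sup>L M (\<lambda>\<omega>. min (s n + P n \<omega> \<bullet> K) 0)"
    unfolding HE using f1 f2 iX by (simp add: X.integral_lin)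
  show "integral\<^sup>L M (\<lambda>\<omega>. (H \<omega>)\<^sup>2) = r\<^sup>2 * (K \<bullet> (second_moment M (P n) *v K))
        + 2 * r * integral\<^sup>L M h1 * integral\<^sup>L M (\<lambda>\<omega>. (P n \<omega> \<bullet> K) * max (s n + P n \<omega> \<bullet> K) 0)
        + 2 * r * integral\<^sup>L M h2 * integral\<^sup>L M (\<lambda>\<omega>. (P n \<omega> \<bullet> K) * min (s n + P n \<omega> \<bullet> K) 0)
        + integral\<^sup>L M (\<lambda>\<omega>. (h1 \<omega>)\<^sup>2) * integral\<^sup>L M (\<lambda>\<omega>. (max (s n + P n \<omega> \<bullet> K) 0)\<^sup>2)
        + integral\<^sup>L M (\<lambda>\<omega>. (h2 \<omega>)\<^sup>2) * integral\<^sup>L M (\<lambda>\<omega>. (min (s n + P n \<omega> \<bullet> K) 0)\<^sup>2)"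
    unfolding HSE using f3 f4 f5 f6 iX by (simp add: X.integral_sq)
qed

end


lemma ofb:
  fixes a z x :: real
  shows "a * z * of_bool (0 \<le> z) = a * max z 0" "a * z * of_bool (z < 0) = a * min z 0"
    "a * z * of_bool (z \<le> 0) = a * min z 0" "a * z * of_bool (0 < z) = a * max z 0"
    "a * z * x * of_bool (0 \<le> z) = a * (x * max z 0)" "a * z * x * of_bool (z < 0) = a * (x * min z 0)"
    "a * z * x * of_bool (z \<le> 0) = a * (x * min z 0)" "a * z * x * of_bool (0 < z) = a * (x * max z 0)"
    "a * z\<^sup>2 * of_bool (0 \<le> z) = a * (max z 0)\<^sup>2" "a * z\<^sup>2 * of_bool (z < 0) = a * (min z 0)\<^sup>2"
    "a * z\<^sup>2 * of_bool (z \<le> 0) = a * (min z 0)\<^sup>2" "a * z\<^sup>2 * of_bool (0 < z) = a * (max z 0)\<^sup>2"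
  by (auto simp: max_def min_def)

locale mpK = mp M P s T for M :: "'w measure" and P :: "nat \<Rightarrow> 'w \<Rightarrow> real^'n" and s T +
  fixes gp gm :: "nat \<Rightarrow> real" and Kp Km :: "nat \<Rightarrow> real^'n" and ap am bp bm :: "nat \<Rightarrow> real" and t0 :: nat
  assumes rec: "recursion_from M s P T gp gm Kp Km ap am bp bm t0"
begin

definition hp :: "nat \<Rightarrow> 'w \<Rightarrow> real" where "hp t \<omega> = fst (HH s T Kp Km (T - t) (\<lambda>i. P i \<omega>))"
definition hm :: "nat \<Rightarrow> 'w \<Rightarrow> real" where "hm t \<omega> = snd (HH s T Kp Km (T - t) (\<lambda>i. P i \<omega>))"

lemma hp_R: "t \<le> T \<Longrightarrow> hp t \<omega> = fst (HH s T Kp Km (T - t) (restrict (\<lambda>i. P i \<omega>) {t..<T}))"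
  unfolding hp_def by (subst HH_local[where Q'="restrict (\<lambda>i. P i \<omega>) {t..<T}"]) auto

lemma hm_R: "t \<le> T \<Longrightarrow> hm t \<omega> = snd (HH s T Kp Km (T - t) (restrict (\<lambda>i. P i \<omega>) {t..<T}))"
  unfolding hm_def by (subst HH_local[where Q'="restrict (\<lambda>i. P i \<omega>) {t..<T}"]) auto

lemma HHm: "t \<le> T \<Longrightarrow> (\<lambda>Q. fst (HH s T Kp Km (T - t) Q)) \<in> borel_measurable (PiM {t..<T} (\<lambda>_. borel :: (real^'n) measure))
   \<and> (\<lambda>Q. snd (HH s T Kp Km (T - t) Q)) \<in> borel_measurable (PiM {t..<T} (\<lambda>_. borel :: (real^'n) measure))"
  by (rule HH_meas) auto

lemma hp_step: "t < T \<Longrightarrow> hp t \<omega> = rho s T (Suc t) * (P t \<omega> \<bullet> Kp t) + pl (hp (Suc t) \<omega>) (hm (Suc t) \<omega>) (s t + P t \<omega> \<bullet> Kp t)"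
proof -
  assume t: "t < T"
  then have e: "T - t = Suc (T - Suc t)" "T - Suc (T - Suc t) = t" by auto
  show ?thesis unfolding hp_def hm_def e(1) by (simp add: Let_def e(2))
qed

lemma hm_step: "t < T \<Longrightarrow> hm t \<omega> = rho s T (Suc t) * (P t \<omega> \<bullet> Km t) + pl (hm (Suc t) \<omega>) (hp (Suc t) \<omega>) (s t + P t \<omega> \<bullet> Km t)"
proof -
  assume t: "t < T"
  then have e: "T - t = Suc (T - Suc t)" "T - Suc (T - Suc t) = t" by auto
  show ?thesis unfolding hp_def hm_def e(1) by (simp add: Let_def e(2))
qed

lemma hp_T: "hp T \<omega> = 0" "hm T \<omega> = 0" by (simp_all add: hp_def hm_def)

definition PH :: "nat \<Rightarrow> bool" where
  "PH t \<longleftrightarrow> integrable M (hp t) \<and> integrable M (\<lambda>\<omega>. (hp t \<omega>)\<^sup>2) \<and> integrable M (hm t) \<and> integrable M (\<lambda>\<omega>. (hm t \<omega>)\<^sup>2)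
     \<and> integral\<^sup>L M (hp t) = ap t \<and> integral\<^sup>L M (\<lambda>\<omega>. (hp t \<omega>)\<^sup>2) = bp t
     \<and> integral\<^sup>L M (hm t) = am t \<and> integral\<^sup>L M (\<lambda>\<omega>. (hm t \<omega>)\<^sup>2) = bm t"

lemma main: "t0 \<le> t \<Longrightarrow> t \<le> T \<Longrightarrow> PH t"
proof -
  assume t0: "t0 \<le> t" and tT: "t \<le> T"
  show "PH t" using tT
  proof (induction rule: inc_induct)
    case base
    have "ap T = 0" "am T = 0" "bp T = 0" "bm T = 0" using rec unfolding recursion_from_def by auto
    then show ?case unfolding PH_def hp_T by simp
  next
    case (step n)
    have n: "n < T" using step by simp
    have rs: "recursion_step M s P T gp gm Kp Km ap am bp bm n"
      using rec t0 step(1) n unfolding recursion_from_def by auto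
    let ?r = "rho s T (Suc n)"
    have sn: "Suc n \<le> T" using n by simp
    have gm1: "(\<lambda>Q. fst (HH s T Kp Km (T - Suc n) Q)) \<in> borel_measurable (PiM {Suc n..<T} (\<lambda>_. borel :: (real^'n) measure))"
      and gm2: "(\<lambda>Q. snd (HH s T Kp Km (T - Suc n) Q)) \<in> borel_measurable (PiM {Suc n..<T} (\<lambda>_. borel :: (real^'n) measure))"
      using HHm[OF sn] by auto
    have IH: "integrable M (hp (Suc n))" "integrable M (\<lambda>\<omega>. (hp (Suc n) \<omega>)\<^sup>2)" "integrable M (hm (Suc n))" "integrable M (\<lambda>\<omega>. (hm (Suc n) \<omega>)\<^sup>2)"
      "integral\<^sup>L M (hp (Suc n)) = ap (Suc n)" "integral\<^sup>L M (\<lambda>\<omega>. (hp (Suc n) \<omega>)\<^sup>2) = bp (Suc n)"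
      "integral\<^sup>L M (hm (Suc n)) = am (Suc n)" "integral\<^sup>L M (\<lambda>\<omega>. (hm (Suc n) \<omega>)\<^sup>2) = bm (Suc n)"
      using step(3) unfolding PH_def by auto
    note SP = step_gen[OF n gm1 gm2 hp_R[OF sn] hm_R[OF sn] IH(1-4), of ?r "Kp n"]
    note SM = step_gen[OF n gm2 gm1 hm_R[OF sn] hp_R[OF sn] IH(3,4,1,2), of ?r "Km n"]
    have hpe: "hp n = (\<lambda>\<omega>. ?r * (P n \<omega> \<bullet> Kp n) + pl (hp (Suc n) \<omega>) (hm (Suc n) \<omega>) (s n + P n \<omega> \<bullet> Kp n))"
      using hp_step[OF n] by auto
    have hme: "hm n = (\<lambda>\<omega>. ?r * (P n \<omega> \<bullet> Km n) + pl (hm (Suc n) \<omega>) (hp (Suc n) \<omega>) (s n + P n \<omega> \<bullet> Km n))"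
      using hm_step[OF n] by auto
    have ap: "ap n = ?r * (mean_vec M (P n) \<bullet> Kp n)
          + integral\<^sup>L M (\<lambda>\<omega>. ap (Suc n) * (s n + P n \<omega> \<bullet> Kp n) * of_bool (s n + P n \<omega> \<bullet> Kp n \<ge> 0))
          + integral\<^sup>L M (\<lambda>\<omega>. am (Suc n) * (s n + P n \<omega> \<bullet> Kp n) * of_bool (s n + P n \<omega> \<bullet> Kp n < 0))"
      and am: "am n = ?r * (mean_vec M (P n) \<bullet> Km n)
          + integral\<^sup>L M (\<lambda>\<omega>. ap (Suc n) * (s n + P n \<omega> \<bullet> Km n) * of_bool (s n + P n \<omega> \<bullet> Km n \<le> 0))
          + integral\<^sup>L M (\<lambda>\<omega>. am (Suc n) * (s n + P n \<omega> \<bullet> Km n) * of_bool (s n + P n \<omega> \<bullet> Km n > 0))"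
      and bp: "bp n = ?r\<^sup>2 * (Kp n \<bullet> (second_moment M (P n) *v Kp n))
          + 2 * ?r * integral\<^sup>L M (\<lambda>\<omega>. ap (Suc n) * (s n + P n \<omega> \<bullet> Kp n) * (P n \<omega> \<bullet> Kp n) * of_bool (s n + P n \<omega> \<bullet> Kp n \<ge> 0))
          + 2 * ?r * integral\<^sup>L M (\<lambda>\<omega>. am (Suc n) * (s n + P n \<omega> \<bullet> Kp n) * (P n \<omega> \<bullet> Kp n) * of_bool (s n + P n \<omega> \<bullet> Kp n < 0))
          + integral\<^sup>L M (\<lambda>\<omega>. bp (Suc n) * (s n + P n \<omega> \<bullet> Kp n)\<^sup>2 * of_bool (s n + P n \<omega> \<bullet> Kp n \<ge> 0))
          + integral\<^sup>L M (\<lambda>\<omega>. bm (Suc n) * (s n + P n \<omega> \<bullet> Kp n)\<^sup>2 * of_bool (s n + P n \<omega> \<bullet> Kp n < 0))"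
      and bm: "bm n = ?r\<^sup>2 * (Km n \<bullet> (second_moment M (P n) *v Km n))
          + 2 * ?r * integral\<^sup>L M (\<lambda>\<omega>. ap (Suc n) * (s n + P n \<omega> \<bullet> Km n) * (P n \<omega> \<bullet> Km n) * of_bool (s n + P n \<omega> \<bullet> Km n \<le> 0))
          + 2 * ?r * integral\<^sup>L M (\<lambda>\<omega>. am (Suc n) * (s n + P n \<omega> \<bullet> Km n) * (P n \<omega> \<bullet> Km n) * of_bool (s n + P n \<omega> \<bullet> Km n > 0))
          + integral\<^sup>L M (\<lambda>\<omega>. bp (Suc n) * (s n + P n \<omega> \<bullet> Km n)\<^sup>2 * of_bool (s n + P n \<omega> \<bullet> Km n \<le> 0))
          + integral\<^sup>L M (\<lambda>\<omega>. bm (Suc n) * (s n + P n \<omega> \<bullet> Km n)\<^sup>2 * of_bool (s n + P n \<omega> \<bullet> Km n > 0))"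
      using rs unfolding recursion_step_def Let_def by auto
    show ?case unfolding PH_def hpe hme
      using SP SM IH(5-8) unfolding ap am bp bm ofb integral_mult_right_zero
      by (simp add: algebra_simps)
  qed
qed

end


context onevec
begin

lemma mx_pl: "max z 0 = pl 1 0 z" "min z 0 = pl 0 1 z" for z :: real by (auto simp: pl_def)

lemma int_mx: "integrable M (\<lambda>\<omega>. max (s + X \<omega> \<bullet> K) 0)" "integrable M (\<lambda>\<omega>. min (s + X \<omega> \<bullet> K) 0)"
  "integrable M (\<lambda>\<omega>. (max (s + X \<omega> \<bullet> K) 0)\<^sup>2)" "integrable M (\<lambda>\<omega>. (min (s + X \<omega> \<bullet> K) 0)\<^sup>2)"
  unfolding mx_pl by (rule int_pl int_pl2)+

lemma E_pl: "integral\<^sup>L M (\<lambda>\<omega>. pl a b (s + X \<omega> \<bullet> K))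
   = a * integral\<^sup>L M (\<lambda>\<omega>. max (s + X \<omega> \<bullet> K) 0) + b * integral\<^sup>L M (\<lambda>\<omega>. min (s + X \<omega> \<bullet> K) 0)"
  unfolding pl_def using int_mx by simp

lemma E_pl2: "integral\<^sup>L M (\<lambda>\<omega>. (pl a b (s + X \<omega> \<bullet> K))\<^sup>2)
   = a\<^sup>2 * integral\<^sup>L M (\<lambda>\<omega>. (max (s + X \<omega> \<bullet> K) 0)\<^sup>2) + b\<^sup>2 * integral\<^sup>L M (\<lambda>\<omega>. (min (s + X \<omega> \<bullet> K) 0)\<^sup>2)"
proof -
  have "(pl a b z)\<^sup>2 = a\<^sup>2 * (max z 0)\<^sup>2 + b\<^sup>2 * (min z 0)\<^sup>2" for z
    unfolding pl_def power2_eq_square using maxmin0[of z] by (simp add: algebra_simps)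
  then show ?thesis using int_mx by simp
qed

lemma E_Z: "integral\<^sup>L M (\<lambda>\<omega>. max (s + X \<omega> \<bullet> K) 0) + integral\<^sup>L M (\<lambda>\<omega>. min (s + X \<omega> \<bullet> K) 0) = s + mean_vec M X \<bullet> K"
proof -
  have "max z 0 + min z 0 = z" for z :: real by (simp add: max_def min_def)
  then have "integral\<^sup>L M (\<lambda>\<omega>. max (s + X \<omega> \<bullet> K) 0) + integral\<^sup>L M (\<lambda>\<omega>. min (s + X \<omega> \<bullet> K) 0)
     = integral\<^sup>L M (\<lambda>\<omega>. s + X \<omega> \<bullet> K)"
    using int_mx by (subst Bochner_Integration.integral_add[symmetric]) auto
  also have "\<dots> = s + mean_vec M X \<bullet> K" using int_lin by (simp add: integral_lin prob_space)
  finally show ?thesis .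
qed

lemma E_Z2: "integral\<^sup>L M (\<lambda>\<omega>. (max (s + X \<omega> \<bullet> K) 0)\<^sup>2) + integral\<^sup>L M (\<lambda>\<omega>. (min (s + X \<omega> \<bullet> K) 0)\<^sup>2)
   = K \<bullet> (cov_matrix M X *v K) + (s + mean_vec M X \<bullet> K)\<^sup>2"
proof -
  have "(max z 0)\<^sup>2 + (min z 0)\<^sup>2 = z\<^sup>2" for z :: real by (simp add: max_def min_def)
  then have "integral\<^sup>L M (\<lambda>\<omega>. (max (s + X \<omega> \<bullet> K) 0)\<^sup>2) + integral\<^sup>L M (\<lambda>\<omega>. (min (s + X \<omega> \<bullet> K) 0)\<^sup>2)
     = integral\<^sup>L M (\<lambda>\<omega>. (s + X \<omega> \<bullet> K)\<^sup>2)"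
    using int_mx by (subst Bochner_Integration.integral_add[symmetric]) auto
  also have "(\<lambda>\<omega>. (s + X \<omega> \<bullet> K)\<^sup>2) = (\<lambda>\<omega>. s\<^sup>2 + 2 * s * (X \<omega> \<bullet> K) + (X \<omega> \<bullet> K)\<^sup>2)"
    by (simp add: power2_eq_square algebra_simps)
  also have "integral\<^sup>L M \<dots> = s\<^sup>2 + 2 * s * (mean_vec M X \<bullet> K) + integral\<^sup>L M (\<lambda>\<omega>. (X \<omega> \<bullet> K)\<^sup>2)"
    using int_lin int_sq by (simp add: integral_lin prob_space)
  also have "\<dots> = K \<bullet> (cov_matrix M X *v K) + (s + mean_vec M X \<bullet> K)\<^sup>2"
    unfolding cov_eq integral_lin by (simp add: power2_eq_square algebra_simps)
  finally show ?thesis .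
qed

lemma G_scale:
  assumes d: "d \<noteq> 0"
  shows "G a b c e (d * s) g v = d\<^sup>2 * (if d > 0 then G a b c e s (g / d) ((1/d) *\<^sub>R v) else G b a e c s (g / d) ((1/d) *\<^sub>R v))"
proof -
  define w where "w = (1/d) *\<^sub>R v"
  have z: "d * s + X \<omega> \<bullet> v = d * (s + X \<omega> \<bullet> w)" for \<omega>
    unfolding w_def using d by (simp add: algebra_simps)
  show ?thesis
  proof (cases "d > 0")
    case True
    then have h: "pl a' b' (d * s + X \<omega> \<bullet> v) = d * pl a' b' (s + X \<omega> \<bullet> w)" for a' b' \<omega>
      unfolding z by (intro pl_hom) simp
    show ?thesis unfolding G_def h var_scale integral_mult_right_zero w_def[symmetric]
      using True d by (simp add: power_mult_distrib power2_eq_square field_simps)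
  next
    case False
    then have h: "pl a' b' (d * s + X \<omega> \<bullet> v) = d * pl b' a' (s + X \<omega> \<bullet> w)" for a' b' \<omega>
      unfolding z by (intro pl_hom_neg) simp
    show ?thesis unfolding G_def h var_scale integral_mult_right_zero w_def[symmetric]
      using False d by (simp add: power_mult_distrib power2_eq_square field_simps)
  qed
qed

end


context mp
begin

lemma Fplus_G:
  assumes t: "t < T" and v1: "0 \<le> bp (Suc t) - (ap (Suc t))\<^sup>2" and v2: "0 \<le> bm (Suc t) - (am (Suc t))\<^sup>2"
  shows "Fplus M s P T ap am bp bm gp t K = onevec.G M (P t) (rho s T (Suc t) + ap (Suc t)) (rho s T (Suc t) + am (Suc t))
     (sqrt (bp (Suc t) - (ap (Suc t))\<^sup>2)) (sqrt (bm (Suc t) - (am (Suc t))\<^sup>2)) (s t) (gp t) K"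
proof -
  interpret X: onevec2 M "P t" using ov[OF t] .
  define r where "r = rho s T (Suc t)"
  define a where "a = integral\<^sup>L M (\<lambda>\<omega>. max (s t + P t \<omega> \<bullet> K) 0)"
  define b where "b = integral\<^sup>L M (\<lambda>\<omega>. min (s t + P t \<omega> \<bullet> K) 0)"
  define A where "A = integral\<^sup>L M (\<lambda>\<omega>. (max (s t + P t \<omega> \<bullet> K) 0)\<^sup>2)"
  define B where "B = integral\<^sup>L M (\<lambda>\<omega>. (min (s t + P t \<omega> \<bullet> K) 0)\<^sup>2)"
  have e1: "s t + mean_vec M (P t) \<bullet> K = a + b" unfolding a_def b_def using X.E_Z by simp
  have e2: "K \<bullet> (cov_matrix M (P t) *v K) = A + B - (a + b)\<^sup>2" unfolding A_def B_def using X.E_Z2 e1 by simp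
  have sq1: "(sqrt (bp (Suc t) - (ap (Suc t))\<^sup>2))\<^sup>2 = bp (Suc t) - (ap (Suc t))\<^sup>2" using v1 by simp
  have sq2: "(sqrt (bm (Suc t) - (am (Suc t))\<^sup>2))\<^sup>2 = bm (Suc t) - (am (Suc t))\<^sup>2" using v2 by simp
  have G: "X.G (r + ap (Suc t)) (r + am (Suc t)) (sqrt (bp (Suc t) - (ap (Suc t))\<^sup>2)) (sqrt (bm (Suc t) - (am (Suc t))\<^sup>2)) (s t) (gp t) K
    = (r + ap (Suc t))\<^sup>2 * A + (r + am (Suc t))\<^sup>2 * B - ((r + ap (Suc t)) * a + (r + am (Suc t)) * b)\<^sup>2
      + (bp (Suc t) - (ap (Suc t))\<^sup>2) * A + (bm (Suc t) - (am (Suc t))\<^sup>2) * B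
      - gp t * ((r + ap (Suc t)) * a + (r + am (Suc t)) * b)"
    unfolding X.G_alt X.E_pl X.E_pl2 sq1 sq2 a_def b_def A_def B_def by simp
  have F: "Fplus M s P T ap am bp bm gp t K = r\<^sup>2 * (A + B - (a + b)\<^sup>2)
     + (2 * r * ap (Suc t) + bp (Suc t)) * A + (2 * r * am (Suc t) + bm (Suc t)) * B
     - (ap (Suc t) * a + am (Suc t) * b)\<^sup>2 - 2 * r * (ap (Suc t) * a + am (Suc t) * b) * (a + b)
     - gp t * (ap (Suc t) * a + am (Suc t) * b) - r * gp t * (a + b)"
    unfolding Fplus_def Let_def r_def[symmetric] e1 e2 ofb integral_mult_right_zero a_def b_def A_def B_def
    by simp
  show ?thesis unfolding F using G unfolding r_def
    by (simp add: power2_eq_square algebra_simps)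
qed

lemma Fminus_G:
  assumes t: "t < T" and v1: "0 \<le> bp (Suc t) - (ap (Suc t))\<^sup>2" and v2: "0 \<le> bm (Suc t) - (am (Suc t))\<^sup>2"
  shows "Fminus M s P T ap am bp bm gm t K = onevec.G M (P t) (rho s T (Suc t) + am (Suc t)) (rho s T (Suc t) + ap (Suc t))
     (sqrt (bm (Suc t) - (am (Suc t))\<^sup>2)) (sqrt (bp (Suc t) - (ap (Suc t))\<^sup>2)) (s t) (- gm t) K"
proof -
  interpret X: onevec2 M "P t" using ov[OF t] .
  define r where "r = rho s T (Suc t)"
  define a where "a = integral\<^sup>L M (\<lambda>\<omega>. max (s t + P t \<omega> \<bullet> K) 0)"
  define b where "b = integral\<^sup>L M (\<lambda>\<omega>. min (s t + P t \<omega> \<bullet> K) 0)"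
  define A where "A = integral\<^sup>L M (\<lambda>\<omega>. (max (s t + P t \<omega> \<bullet> K) 0)\<^sup>2)"
  define B where "B = integral\<^sup>L M (\<lambda>\<omega>. (min (s t + P t \<omega> \<bullet> K) 0)\<^sup>2)"
  have e1: "s t + mean_vec M (P t) \<bullet> K = a + b" unfolding a_def b_def using X.E_Z by simp
  have e2: "K \<bullet> (cov_matrix M (P t) *v K) = A + B - (a + b)\<^sup>2" unfolding A_def B_def using X.E_Z2 e1 by simp
  have sq1: "(sqrt (bp (Suc t) - (ap (Suc t))\<^sup>2))\<^sup>2 = bp (Suc t) - (ap (Suc t))\<^sup>2" using v1 by simp
  have sq2: "(sqrt (bm (Suc t) - (am (Suc t))\<^sup>2))\<^sup>2 = bm (Suc t) - (am (Suc t))\<^sup>2" using v2 by simp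
  have G: "X.G (r + am (Suc t)) (r + ap (Suc t)) (sqrt (bm (Suc t) - (am (Suc t))\<^sup>2)) (sqrt (bp (Suc t) - (ap (Suc t))\<^sup>2)) (s t) (- gm t) K
    = (r + am (Suc t))\<^sup>2 * A + (r + ap (Suc t))\<^sup>2 * B - ((r + am (Suc t)) * a + (r + ap (Suc t)) * b)\<^sup>2
      + (bm (Suc t) - (am (Suc t))\<^sup>2) * A + (bp (Suc t) - (ap (Suc t))\<^sup>2) * B
      + gm t * ((r + am (Suc t)) * a + (r + ap (Suc t)) * b)"
    unfolding X.G_alt X.E_pl X.E_pl2 sq1 sq2 a_def b_def A_def B_def by simp
  have F: "Fminus M s P T ap am bp bm gm t K = r\<^sup>2 * (A + B - (a + b)\<^sup>2)
     + (2 * r * ap (Suc t) + bp (Suc t)) * B + (2 * r * am (Suc t) + bm (Suc t)) * A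
     - (ap (Suc t) * b + am (Suc t) * a)\<^sup>2 - 2 * r * (ap (Suc t) * b + am (Suc t) * a) * (a + b)
     + gm t * (ap (Suc t) * b + am (Suc t) * a) + r * gm t * (a + b)"
    unfolding Fminus_def Let_def r_def[symmetric] e1 e2 ofb integral_mult_right_zero a_def b_def A_def B_def
    by simp
  show ?thesis unfolding F using G unfolding r_def
    by (simp add: power2_eq_square algebra_simps)
qed

end


lemma var_shift:
  fixes f :: "'a \<Rightarrow> real"
  assumes ps: "prob_space M" and f: "integrable M f"
  shows "var M (\<lambda>\<omega>. c + f \<omega>) = var M f"
proof -
  interpret prob_space M by (rule ps)
  have "integral\<^sup>L M (\<lambda>\<omega>. c + f \<omega>) = c + integral\<^sup>L M f" using f by (simp add: prob_space)
  then show ?thesis unfolding var_def by simp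
qed

context mpK
begin

lemma term_eq:
  assumes t: "t < T"
  shows "terminal_dev s P (tc_policy s T W Kp Km) T t x v \<omega>
    = W + pl (rho s T (Suc t) + hp (Suc t) \<omega>) (rho s T (Suc t) + hm (Suc t) \<omega>) (s t * (x - W / rho s T t) + P t \<omega> \<bullet> v)"
proof -
  define r where "r = rho s T (Suc t)"
  define y where "y = s t * x + P t \<omega> \<bullet> v"
  define e where "e = s t * (x - W / rho s T t) + P t \<omega> \<bullet> v"
  have r0: "0 < r" unfolding r_def by (rule rho_pos[OF spos])
  have rt: "rho s T t = s t * r" unfolding r_def by (rule rho_step[OF t])
  have st: "0 < s t" using spos t by simp
  have ye: "y - W / r = e" unfolding y_def e_def rt using st r0 by (simp add: field_simps)
  have "terminal_dev s P (tc_policy s T W Kp Km) T t x v \<omega> = wealth s P (tc_policy s T W Kp Km) (Suc t) (T - Suc t) y \<omega>"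
    unfolding terminal_dev_def y_def ..
  also have "\<dots> = r * y + pl (hp (Suc t) \<omega>) (hm (Suc t) \<omega>) (y - W / r)"
    using wealth_hom[OF spos, where t="Suc t" and k="T - Suc t" and x=y and \<omega>=\<omega> and P=P and W=W and Kp=Kp and Km=Km] t unfolding hp_def hm_def r_def by simp
  also have "\<dots> = W + r * e + pl (hp (Suc t) \<omega>) (hm (Suc t) \<omega>) e"
    unfolding ye[symmetric] using r0 by (simp add: field_simps)
  also have "\<dots> = W + pl (r + hp (Suc t) \<omega>) (r + hm (Suc t) \<omega>) e"
    unfolding pl_def by (simp add: max_def min_def algebra_simps)
  finally show ?thesis unfolding r_def e_def .
qed

lemma term_moments:
  fixes a0 :: real and v :: "real^'n"
  assumes t: "t < T" and t0: "t0 \<le> Suc t"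
  defines "H \<equiv> (\<lambda>\<omega>. pl (rho s T (Suc t) + hp (Suc t) \<omega>) (rho s T (Suc t) + hm (Suc t) \<omega>) (a0 + P t \<omega> \<bullet> v))"
  shows "integrable M H" "integrable M (\<lambda>\<omega>. (H \<omega>)\<^sup>2)"
    "integral\<^sup>L M H = (rho s T (Suc t) + ap (Suc t)) * integral\<^sup>L M (\<lambda>\<omega>. max (a0 + P t \<omega> \<bullet> v) 0)
       + (rho s T (Suc t) + am (Suc t)) * integral\<^sup>L M (\<lambda>\<omega>. min (a0 + P t \<omega> \<bullet> v) 0)"
    "integral\<^sup>L M (\<lambda>\<omega>. (H \<omega>)\<^sup>2) = ((rho s T (Suc t))\<^sup>2 + 2 * rho s T (Suc t) * ap (Suc t) + bp (Suc t)) * integral\<^sup>L M (\<lambda>\<omega>. (max (a0 + P t \<omega> \<bullet> v) 0)\<^sup>2)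
       + ((rho s T (Suc t))\<^sup>2 + 2 * rho s T (Suc t) * am (Suc t) + bm (Suc t)) * integral\<^sup>L M (\<lambda>\<omega>. (min (a0 + P t \<omega> \<bullet> v) 0)\<^sup>2)"
proof -
  interpret X: onevec2 M "P t" using ov[OF t] .
  have Pm[measurable]: "P t \<in> borel_measurable M" using meas[OF t] .
  have sn: "Suc t \<le> T" using t by simp
  have PH: "PH (Suc t)" by (rule main[OF t0 sn])
  have IH: "integrable M (hp (Suc t))" "integrable M (\<lambda>\<omega>. (hp (Suc t) \<omega>)\<^sup>2)" "integrable M (hm (Suc t))" "integrable M (\<lambda>\<omega>. (hm (Suc t) \<omega>)\<^sup>2)"
      "integral\<^sup>L M (hp (Suc t)) = ap (Suc t)" "integral\<^sup>L M (\<lambda>\<omega>. (hp (Suc t) \<omega>)\<^sup>2) = bp (Suc t)"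
      "integral\<^sup>L M (hm (Suc t)) = am (Suc t)" "integral\<^sup>L M (\<lambda>\<omega>. (hm (Suc t) \<omega>)\<^sup>2) = bm (Suc t)"
    using PH unfolding PH_def by auto
  let ?R = "\<lambda>\<omega>. restrict (\<lambda>i. P i \<omega>) {Suc t..<T}"
  have gm1[measurable]: "(\<lambda>Q. fst (HH s T Kp Km (T - Suc t) Q)) \<in> borel_measurable (PiM {Suc t..<T} (\<lambda>_. borel :: (real^'n) measure))"
    and gm2[measurable]: "(\<lambda>Q. snd (HH s T Kp Km (T - Suc t) Q)) \<in> borel_measurable (PiM {Suc t..<T} (\<lambda>_. borel :: (real^'n) measure))"
    using HHm[OF sn] by auto
  have fac: "integrable M (\<lambda>\<omega>. F (P t \<omega>) * h \<omega>) \<and> integral\<^sup>L M (\<lambda>\<omega>. F (P t \<omega>) * h \<omega>) = integral\<^sup>L M (\<lambda>\<omega>. F (P t \<omega>)) * integral\<^sup>L M h"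
    if F: "F \<in> borel_measurable borel" and iF: "integrable M (\<lambda>\<omega>. F (P t \<omega>))"
      and g: "g \<in> borel_measurable (PiM {Suc t..<T} (\<lambda>_. borel :: (real^'n) measure))"
      and h: "\<And>\<omega>. h \<omega> = g (?R \<omega>)" and ih: "integrable M h"
    for F :: "real^'n \<Rightarrow> real" and g :: "(nat \<Rightarrow> real^'n) \<Rightarrow> real" and h
  proof -
    have hh: "h = (\<lambda>\<omega>. g (?R \<omega>))" using h by auto
    show ?thesis using factor[OF t F g iF] ih unfolding hh by simp
  qed
  have gs1: "(\<lambda>Q. (fst (HH s T Kp Km (T - Suc t) Q))\<^sup>2) \<in> borel_measurable (PiM {Suc t..<T} (\<lambda>_. borel :: (real^'n) measure))" by measurable
  have gs2: "(\<lambda>Q. (snd (HH s T Kp Km (T - Suc t) Q))\<^sup>2) \<in> borel_measurable (PiM {Suc t..<T} (\<lambda>_. borel :: (real^'n) measure))" by measurable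
  have h1s: "(hp (Suc t) \<omega>)\<^sup>2 = (fst (HH s T Kp Km (T - Suc t) (?R \<omega>)))\<^sup>2" for \<omega> using hp_R[OF sn] by simp
  have h2s: "(hm (Suc t) \<omega>)\<^sup>2 = (snd (HH s T Kp Km (T - Suc t) (?R \<omega>)))\<^sup>2" for \<omega> using hm_R[OF sn] by simp
  have Fm1: "(\<lambda>q. max (a0 + q \<bullet> v) 0) \<in> borel_measurable borel" by measurable
  have Fm2: "(\<lambda>q. min (a0 + q \<bullet> v) 0) \<in> borel_measurable borel" by measurable
  have Fm3: "(\<lambda>q. (max (a0 + q \<bullet> v) 0)\<^sup>2) \<in> borel_measurable borel" by measurable
  have Fm4: "(\<lambda>q. (min (a0 + q \<bullet> v) 0)\<^sup>2) \<in> borel_measurable borel" by measurable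
  note iM = X.int_mx[of a0 v]
  note f1 = fac[OF Fm1 iM(1) gm1 hp_R[OF sn] IH(1)]
  note f2 = fac[OF Fm2 iM(2) gm2 hm_R[OF sn] IH(3)]
  note f3 = fac[OF Fm3 iM(3) gm1 hp_R[OF sn] IH(1)]
  note f4 = fac[OF Fm4 iM(4) gm2 hm_R[OF sn] IH(3)]
  note f5 = fac[OF Fm3 iM(3) gs1 h1s IH(2)]
  note f6 = fac[OF Fm4 iM(4) gs2 h2s IH(4)]
  define r where "r = rho s T (Suc t)"
  have HE: "H = (\<lambda>\<omega>. r * max (a0 + P t \<omega> \<bullet> v) 0 + r * min (a0 + P t \<omega> \<bullet> v) 0
       + max (a0 + P t \<omega> \<bullet> v) 0 * hp (Suc t) \<omega> + min (a0 + P t \<omega> \<bullet> v) 0 * hm (Suc t) \<omega>)"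
    unfolding H_def pl_def r_def by (simp add: algebra_simps)
  have HS: "(\<lambda>\<omega>. (H \<omega>)\<^sup>2) = (\<lambda>\<omega>. r\<^sup>2 * (max (a0 + P t \<omega> \<bullet> v) 0)\<^sup>2 + r\<^sup>2 * (min (a0 + P t \<omega> \<bullet> v) 0)\<^sup>2
       + 2 * r * ((max (a0 + P t \<omega> \<bullet> v) 0)\<^sup>2 * hp (Suc t) \<omega>) + 2 * r * ((min (a0 + P t \<omega> \<bullet> v) 0)\<^sup>2 * hm (Suc t) \<omega>)
       + (max (a0 + P t \<omega> \<bullet> v) 0)\<^sup>2 * (hp (Suc t) \<omega>)\<^sup>2 + (min (a0 + P t \<omega> \<bullet> v) 0)\<^sup>2 * (hm (Suc t) \<omega>)\<^sup>2)"
  proof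
    fix \<omega>
    have mm: "max (a0 + P t \<omega> \<bullet> v) 0 * min (a0 + P t \<omega> \<bullet> v) 0 = 0" by (rule maxmin0)
    show "(H \<omega>)\<^sup>2 = r\<^sup>2 * (max (a0 + P t \<omega> \<bullet> v) 0)\<^sup>2 + r\<^sup>2 * (min (a0 + P t \<omega> \<bullet> v) 0)\<^sup>2
       + 2 * r * ((max (a0 + P t \<omega> \<bullet> v) 0)\<^sup>2 * hp (Suc t) \<omega>) + 2 * r * ((min (a0 + P t \<omega> \<bullet> v) 0)\<^sup>2 * hm (Suc t) \<omega>)
       + (max (a0 + P t \<omega> \<bullet> v) 0)\<^sup>2 * (hp (Suc t) \<omega>)\<^sup>2 + (min (a0 + P t \<omega> \<bullet> v) 0)\<^sup>2 * (hm (Suc t) \<omega>)\<^sup>2"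
      unfolding HE power2_eq_square using mm by (simp add: algebra_simps)
  qed
  show "integrable M H" unfolding HE using f1 f2 iM by auto
  show "integrable M (\<lambda>\<omega>. (H \<omega>)\<^sup>2)" unfolding HS using f3 f4 f5 f6 iM by auto
  show "integral\<^sup>L M H = (rho s T (Suc t) + ap (Suc t)) * integral\<^sup>L M (\<lambda>\<omega>. max (a0 + P t \<omega> \<bullet> v) 0)
       + (rho s T (Suc t) + am (Suc t)) * integral\<^sup>L M (\<lambda>\<omega>. min (a0 + P t \<omega> \<bullet> v) 0)"
    unfolding HE r_def[symmetric] using f1 f2 iM IH by (simp add: algebra_simps)
  show "integral\<^sup>L M (\<lambda>\<omega>. (H \<omega>)\<^sup>2) = ((rho s T (Suc t))\<^sup>2 + 2 * rho s T (Suc t) * ap (Suc t) + bp (Suc t)) * integral\<^sup>L M (\<lambda>\<omega>. (max (a0 + P t \<omega> \<bullet> v) 0)\<^sup>2)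
       + ((rho s T (Suc t))\<^sup>2 + 2 * rho s T (Suc t) * am (Suc t) + bm (Suc t)) * integral\<^sup>L M (\<lambda>\<omega>. (min (a0 + P t \<omega> \<bullet> v) 0)\<^sup>2)"
    unfolding HS r_def[symmetric] using f3 f4 f5 f6 iM IH by (simp add: algebra_simps)
qed

end


context mpK
begin

lemma v_nonneg: "t0 \<le> t \<Longrightarrow> t \<le> T \<Longrightarrow> 0 \<le> bp t - (ap t)\<^sup>2 \<and> 0 \<le> bm t - (am t)\<^sup>2"
proof -
  assume a: "t0 \<le> t" "t \<le> T"
  have PH: "PH t" by (rule main[OF a])
  then have i: "integrable M (hp t)" "integrable M (\<lambda>\<omega>. (hp t \<omega>)\<^sup>2)" "integrable M (hm t)" "integrable M (\<lambda>\<omega>. (hm t \<omega>)\<^sup>2)"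
    and e: "integral\<^sup>L M (hp t) = ap t" "integral\<^sup>L M (\<lambda>\<omega>. (hp t \<omega>)\<^sup>2) = bp t"
      "integral\<^sup>L M (hm t) = am t" "integral\<^sup>L M (\<lambda>\<omega>. (hm t \<omega>)\<^sup>2) = bm t"
    unfolding PH_def by auto
  have "var M (hp t) = bp t - (ap t)\<^sup>2" "var M (hm t) = bm t - (am t)\<^sup>2"
    using var_eq_prob[OF prob_space_axioms i(1,2)] var_eq_prob[OF prob_space_axioms i(3,4)] e by auto
  then show ?thesis using var_nonneg[of M "hp t"] var_nonneg[of M "hm t"] by simp
qed

lemma J_eq:
  assumes t: "t < T" and t0: "t0 \<le> Suc t"
  shows "var M (terminal_dev s P (tc_policy s T W Kp Km) T t x v) - g * integral\<^sup>L M (terminal_dev s P (tc_policy s T W Kp Km) T t x v)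
    = onevec.G M (P t) (rho s T (Suc t) + ap (Suc t)) (rho s T (Suc t) + am (Suc t))
        (sqrt (bp (Suc t) - (ap (Suc t))\<^sup>2)) (sqrt (bm (Suc t) - (am (Suc t))\<^sup>2)) (s t * (x - W / rho s T t)) g v - g * W"
proof -
  interpret X: onevec2 M "P t" using ov[OF t] .
  define a0 where "a0 = s t * (x - W / rho s T t)"
  define r where "r = rho s T (Suc t)"
  define H where "H = (\<lambda>\<omega>. pl (r + hp (Suc t) \<omega>) (r + hm (Suc t) \<omega>) (a0 + P t \<omega> \<bullet> v))"
  have sn: "Suc t \<le> T" using t by simp
  have vn: "0 \<le> bp (Suc t) - (ap (Suc t))\<^sup>2" "0 \<le> bm (Suc t) - (am (Suc t))\<^sup>2" using v_nonneg[OF t0 sn] by auto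
  have sq1: "(sqrt (bp (Suc t) - (ap (Suc t))\<^sup>2))\<^sup>2 = bp (Suc t) - (ap (Suc t))\<^sup>2" using vn by simp
  have sq2: "(sqrt (bm (Suc t) - (am (Suc t))\<^sup>2))\<^sup>2 = bm (Suc t) - (am (Suc t))\<^sup>2" using vn by simp
  define a where "a = integral\<^sup>L M (\<lambda>\<omega>. max (a0 + P t \<omega> \<bullet> v) 0)"
  define b where "b = integral\<^sup>L M (\<lambda>\<omega>. min (a0 + P t \<omega> \<bullet> v) 0)"
  define A where "A = integral\<^sup>L M (\<lambda>\<omega>. (max (a0 + P t \<omega> \<bullet> v) 0)\<^sup>2)"
  define B where "B = integral\<^sup>L M (\<lambda>\<omega>. (min (a0 + P t \<omega> \<bullet> v) 0)\<^sup>2)"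
  have TM: "integrable M H" "integrable M (\<lambda>\<omega>. (H \<omega>)\<^sup>2)"
    "integral\<^sup>L M H = (r + ap (Suc t)) * a + (r + am (Suc t)) * b"
    "integral\<^sup>L M (\<lambda>\<omega>. (H \<omega>)\<^sup>2) = (r\<^sup>2 + 2 * r * ap (Suc t) + bp (Suc t)) * A + (r\<^sup>2 + 2 * r * am (Suc t) + bm (Suc t)) * B"
    using term_moments[OF t t0, of a0 v] unfolding H_def r_def a_def b_def A_def B_def by simp_all
  have td: "terminal_dev s P (tc_policy s T W Kp Km) T t x v = (\<lambda>\<omega>. W + H \<omega>)"
    using term_eq[OF t] unfolding H_def r_def a0_def by auto
  have E: "integral\<^sup>L M (\<lambda>\<omega>. W + H \<omega>) = W + integral\<^sup>L M H" using TM(1) by (simp add: prob_space)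
  have V: "var M (\<lambda>\<omega>. W + H \<omega>) = integral\<^sup>L M (\<lambda>\<omega>. (H \<omega>)\<^sup>2) - (integral\<^sup>L M H)\<^sup>2"
    using var_shift[OF prob_space_axioms TM(1)] var_eq_prob[OF prob_space_axioms TM(1,2)] by simp
  have G: "X.G (r + ap (Suc t)) (r + am (Suc t)) (sqrt (bp (Suc t) - (ap (Suc t))\<^sup>2)) (sqrt (bm (Suc t) - (am (Suc t))\<^sup>2)) a0 g v
    = (r + ap (Suc t))\<^sup>2 * A + (r + am (Suc t))\<^sup>2 * B - ((r + ap (Suc t)) * a + (r + am (Suc t)) * b)\<^sup>2
      + (bp (Suc t) - (ap (Suc t))\<^sup>2) * A + (bm (Suc t) - (am (Suc t))\<^sup>2) * B
      - g * ((r + ap (Suc t)) * a + (r + am (Suc t)) * b)"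
    unfolding X.G_alt X.E_pl X.E_pl2 sq1 sq2 a_def b_def A_def B_def by simp
  show ?thesis unfolding td E V TM(3) TM(4) r_def[symmetric] a0_def[symmetric]
    using G by (simp add: power2_eq_square algebra_simps)
qed

lemma G_zero_vec: "onevec M X \<Longrightarrow> onevec.G M X a b c d 0 0 0 = 0"
  using onevec.G_hom[of M X 0 a b c d 0] by simp

lemma TC:
  assumes t0: "t0 \<le> t" and t: "t < T"
  shows "var M (terminal_dev s P (tc_policy s T W Kp Km) T t x (tc_policy s T W Kp Km t x))
      - gamma_beh s T W gp gm t x * integral\<^sup>L M (terminal_dev s P (tc_policy s T W Kp Km) T t x (tc_policy s T W Kp Km t x))
    \<le> var M (terminal_dev s P (tc_policy s T W Kp Km) T t x v) - gamma_beh s T W gp gm t x * integral\<^sup>L M (terminal_dev s P (tc_policy s T W Kp Km) T t x v)"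
proof -
  interpret X: onevec2 M "P t" using ov[OF t] .
  have t0': "t0 \<le> Suc t" using t0 by simp
  have sn: "Suc t \<le> T" using t by simp
  have vn: "0 \<le> bp (Suc t) - (ap (Suc t))\<^sup>2" "0 \<le> bm (Suc t) - (am (Suc t))\<^sup>2" using v_nonneg[OF t0' sn] by auto
  have rs: "recursion_step M s P T gp gm Kp Km ap am bp bm t"
    using rec t0 t unfolding recursion_from_def by auto
  have minp: "Fplus M s P T ap am bp bm gp t (Kp t) \<le> Fplus M s P T ap am bp bm gp t K" for K
    using rs unfolding recursion_step_def Let_def by blast
  have minm: "Fminus M s P T ap am bp bm gm t (Km t) \<le> Fminus M s P T ap am bp bm gm t K" for K
    using rs unfolding recursion_step_def Let_def by blast
  define r where "r = rho s T (Suc t)"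
  define c1 where "c1 = sqrt (bp (Suc t) - (ap (Suc t))\<^sup>2)"
  define c2 where "c2 = sqrt (bm (Suc t) - (am (Suc t))\<^sup>2)"
  define d where "d = x - W / rho s T t"
  define \<gamma> where "\<gamma> = gamma_beh s T W gp gm t x"
  let ?J = "\<lambda>v. var M (terminal_dev s P (tc_policy s T W Kp Km) T t x v) - \<gamma> * integral\<^sup>L M (terminal_dev s P (tc_policy s T W Kp Km) T t x v)"
  have J: "?J v = X.G (r + ap (Suc t)) (r + am (Suc t)) c1 c2 (d * s t) \<gamma> v - \<gamma> * W" for v
    using J_eq[OF t t0', where x=x and g=\<gamma> and v=v and W=W] unfolding r_def c1_def c2_def d_def by (simp add: mult.commute)
  have Fp: "Fplus M s P T ap am bp bm gp t K = X.G (r + ap (Suc t)) (r + am (Suc t)) c1 c2 (s t) (gp t) K" for K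
    using Fplus_G[where ap=ap and am=am and bp=bp and bm=bm and t=t and gp=gp, OF t vn] unfolding r_def c1_def c2_def by simp
  have Fm: "Fminus M s P T ap am bp bm gm t K = X.G (r + am (Suc t)) (r + ap (Suc t)) c2 c1 (s t) (- gm t) K" for K
    using Fminus_G[where ap=ap and am=am and bp=bp and bm=bm and t=t and gm=gm, OF t vn] unfolding r_def c1_def c2_def by simp
  have "?J (tc_policy s T W Kp Km t x) \<le> ?J v"
  proof (cases "d > 0")
    case True
    have u: "tc_policy s T W Kp Km t x = d *\<^sub>R Kp t" using True unfolding tc_policy_def d_def by simp
    have g: "\<gamma> = gp t * d" using True unfolding \<gamma>_def gamma_beh_def d_def by simp
    have gd: "\<gamma> / d = gp t" using True unfolding g by simp
    have dd: "(1 / d) *\<^sub>R (d *\<^sub>R Kp t) = Kp t" using True by simp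
    have "X.G (r + ap (Suc t)) (r + am (Suc t)) c1 c2 (s t) (gp t) (Kp t) \<le> X.G (r + ap (Suc t)) (r + am (Suc t)) c1 c2 (s t) (gp t) ((1/d) *\<^sub>R v)"
      using minp[of "(1/d) *\<^sub>R v"] unfolding Fp .
    then have "d\<^sup>2 * X.G (r + ap (Suc t)) (r + am (Suc t)) c1 c2 (s t) (gp t) (Kp t) \<le> d\<^sup>2 * X.G (r + ap (Suc t)) (r + am (Suc t)) c1 c2 (s t) (gp t) ((1/d) *\<^sub>R v)"
      by (rule mult_left_mono) simp
    then show ?thesis unfolding J u X.G_scale[of d, OF True[THEN less_imp_neq, symmetric]]
      using True by (simp add: gd dd)
  next
    case False
    show ?thesis
    proof (cases "d = 0")
      case True
      have u: "tc_policy s T W Kp Km t x = 0" using True unfolding tc_policy_def d_def by simp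
      have g: "\<gamma> = 0" using True unfolding \<gamma>_def gamma_beh_def d_def by simp
      show ?thesis unfolding J u using True X.G0_nonneg G_zero_vec[OF X.onevec_axioms] by (simp add: g)
    next
      case False2: False
      then have dn: "d < 0" using False by simp
      have u: "tc_policy s T W Kp Km t x = d *\<^sub>R Km t" using dn unfolding tc_policy_def d_def by simp
      have g: "\<gamma> = - gm t * d" using dn unfolding \<gamma>_def gamma_beh_def d_def by simp
      have gd: "\<gamma> / d = - gm t" using dn unfolding g by simp
      have dd: "(1 / d) *\<^sub>R (d *\<^sub>R Km t) = Km t" using dn by simp
      have "X.G (r + am (Suc t)) (r + ap (Suc t)) c2 c1 (s t) (- gm t) (Km t) \<le> X.G (r + am (Suc t)) (r + ap (Suc t)) c2 c1 (s t) (- gm t) ((1/d) *\<^sub>R v)"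
        using minm[of "(1/d) *\<^sub>R v"] unfolding Fm .
      then have "d\<^sup>2 * X.G (r + am (Suc t)) (r + ap (Suc t)) c2 c1 (s t) (- gm t) (Km t) \<le> d\<^sup>2 * X.G (r + am (Suc t)) (r + ap (Suc t)) c2 c1 (s t) (- gm t) ((1/d) *\<^sub>R v)"
        by (rule mult_left_mono) simp
      then show ?thesis unfolding J u X.G_scale[OF False2] using dn by (simp add: gd dd)
    qed
  qed
  then show ?thesis unfolding \<gamma>_def .
qed

end


lemma Fplus_cong:
  "ap (Suc t) = ap' (Suc t) \<Longrightarrow> am (Suc t) = am' (Suc t) \<Longrightarrow> bp (Suc t) = bp' (Suc t) \<Longrightarrow> bm (Suc t) = bm' (Suc t)
   \<Longrightarrow> Fplus M s P T ap am bp bm gp t K = Fplus M s P T ap' am' bp' bm' gp t K"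
  unfolding Fplus_def by simp

lemma Fminus_cong:
  "ap (Suc t) = ap' (Suc t) \<Longrightarrow> am (Suc t) = am' (Suc t) \<Longrightarrow> bp (Suc t) = bp' (Suc t) \<Longrightarrow> bm (Suc t) = bm' (Suc t)
   \<Longrightarrow> Fminus M s P T ap am bp bm gm t K = Fminus M s P T ap' am' bp' bm' gm t K"
  unfolding Fminus_def by simp

definition nxt :: "'w measure \<Rightarrow> (nat \<Rightarrow> real) \<Rightarrow> (nat \<Rightarrow> 'w \<Rightarrow> real^'n) \<Rightarrow> nat \<Rightarrow> nat
    \<Rightarrow> real^'n \<Rightarrow> real^'n \<Rightarrow> real \<Rightarrow> real \<Rightarrow> real \<Rightarrow> real \<Rightarrow> real \<times> real \<times> real \<times> real" where
  "nxt M s P T t Kp Km a1 a2 b1 b2 =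
    (let r = rho s T (Suc t);
         Zp = (\<lambda>\<omega>. s t + P t \<omega> \<bullet> Kp);
         Zm = (\<lambda>\<omega>. s t + P t \<omega> \<bullet> Km)
     in (r * (mean_vec M (P t) \<bullet> Kp)
          + integral\<^sup>L M (\<lambda>\<omega>. a1 * Zp \<omega> * of_bool (Zp \<omega> \<ge> 0))
          + integral\<^sup>L M (\<lambda>\<omega>. a2 * Zp \<omega> * of_bool (Zp \<omega> < 0)),
         r * (mean_vec M (P t) \<bullet> Km)
          + integral\<^sup>L M (\<lambda>\<omega>. a1 * Zm \<omega> * of_bool (Zm \<omega> \<le> 0))
          + integral\<^sup>L M (\<lambda>\<omega>. a2 * Zm \<omega> * of_bool (Zm \<omega> > 0)),
         r\<^sup>2 * (Kp \<bullet> (second_moment M (P t) *v Kp))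
          + 2 * r * integral\<^sup>L M (\<lambda>\<omega>. a1 * Zp \<omega> * (P t \<omega> \<bullet> Kp) * of_bool (Zp \<omega> \<ge> 0))
          + 2 * r * integral\<^sup>L M (\<lambda>\<omega>. a2 * Zp \<omega> * (P t \<omega> \<bullet> Kp) * of_bool (Zp \<omega> < 0))
          + integral\<^sup>L M (\<lambda>\<omega>. b1 * (Zp \<omega>)\<^sup>2 * of_bool (Zp \<omega> \<ge> 0))
          + integral\<^sup>L M (\<lambda>\<omega>. b2 * (Zp \<omega>)\<^sup>2 * of_bool (Zp \<omega> < 0)),
         r\<^sup>2 * (Km \<bullet> (second_moment M (P t) *v Km))
          + 2 * r * integral\<^sup>L M (\<lambda>\<omega>. a1 * Zm \<omega> * (P t \<omega> \<bullet> Km) * of_bool (Zm \<omega> \<le> 0))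
          + 2 * r * integral\<^sup>L M (\<lambda>\<omega>. a2 * Zm \<omega> * (P t \<omega> \<bullet> Km) * of_bool (Zm \<omega> > 0))
          + integral\<^sup>L M (\<lambda>\<omega>. b1 * (Zm \<omega>)\<^sup>2 * of_bool (Zm \<omega> \<le> 0))
          + integral\<^sup>L M (\<lambda>\<omega>. b2 * (Zm \<omega>)\<^sup>2 * of_bool (Zm \<omega> > 0))))"

fun bld :: "'w measure \<Rightarrow> (nat \<Rightarrow> real) \<Rightarrow> (nat \<Rightarrow> 'w \<Rightarrow> real^'n) \<Rightarrow> nat \<Rightarrow> (nat \<Rightarrow> real) \<Rightarrow> (nat \<Rightarrow> real)
    \<Rightarrow> nat \<Rightarrow> (real^'n) \<times> (real^'n) \<times> real \<times> real \<times> real \<times> real" where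
  "bld M s P T gp gm 0 = (0, 0, 0, 0, 0, 0)"
| "bld M s P T gp gm (Suc k) = (case bld M s P T gp gm k of (_, _, a1, a2, b1, b2) \<Rightarrow>
     let t = T - Suc k;
         Kp = (SOME K. \<forall>K'. Fplus M s P T (\<lambda>_. a1) (\<lambda>_. a2) (\<lambda>_. b1) (\<lambda>_. b2) gp t K \<le> Fplus M s P T (\<lambda>_. a1) (\<lambda>_. a2) (\<lambda>_. b1) (\<lambda>_. b2) gp t K');
         Km = (SOME K. \<forall>K'. Fminus M s P T (\<lambda>_. a1) (\<lambda>_. a2) (\<lambda>_. b1) (\<lambda>_. b2) gm t K \<le> Fminus M s P T (\<lambda>_. a1) (\<lambda>_. a2) (\<lambda>_. b1) (\<lambda>_. b2) gm t K')
     in (Kp, Km, nxt M s P T t Kp Km a1 a2 b1 b2))"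

context mp
begin

lemma exist_min:
  assumes t: "t < T" and rec: "recursion_from M s P T gp gm Kp Km ap am bp bm (Suc t)"
  shows "(\<exists>K. \<forall>K'. Fplus M s P T ap am bp bm gp t K \<le> Fplus M s P T ap am bp bm gp t K')
       \<and> (\<exists>K. \<forall>K'. Fminus M s P T ap am bp bm gm t K \<le> Fminus M s P T ap am bp bm gm t K')"
proof -
  interpret X: onevec2 M "P t" using ov[OF t] .
  interpret Kl: mpK M P s T gp gm Kp Km ap am bp bm "Suc t"
    by unfold_locales (rule rec)
  have vn: "0 \<le> bp (Suc t) - (ap (Suc t))\<^sup>2" "0 \<le> bm (Suc t) - (am (Suc t))\<^sup>2"
    using Kl.v_nonneg[of "Suc t"] t by auto
  show ?thesis
    unfolding Fplus_G[where ap=ap and am=am and bp=bp and bm=bm and t=t and gp=gp, OF t vn]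
      Fminus_G[where ap=ap and am=am and bp=bp and bm=bm and t=t and gm=gm, OF t vn]
    using X.G_min by blast
qed

lemma build_rec: "\<exists>Kp Km ap am bp bm. recursion_from M s P T gp gm Kp Km ap am bp bm 0"
proof -
  define B where "B t = bld M s P T gp gm (T - t)" for t
  define Kpf where "Kpf t = fst (B t)" for t
  define Kmf where "Kmf t = fst (snd (B t))" for t
  define apf where "apf t = fst (snd (snd (B t)))" for t
  define amf where "amf t = fst (snd (snd (snd (B t))))" for t
  define bpf where "bpf t = fst (snd (snd (snd (snd (B t)))))" for t
  define bmf where "bmf t = snd (snd (snd (snd (snd (B t)))))" for t
  have BT: "apf T = 0" "amf T = 0" "bpf T = 0" "bmf T = 0"
    by (simp_all add: apf_def amf_def bpf_def bmf_def B_def)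
  have Bstep: "Kpf t = (SOME K. \<forall>K'. Fplus M s P T (\<lambda>_. apf (Suc t)) (\<lambda>_. amf (Suc t)) (\<lambda>_. bpf (Suc t)) (\<lambda>_. bmf (Suc t)) gp t K
                   \<le> Fplus M s P T (\<lambda>_. apf (Suc t)) (\<lambda>_. amf (Suc t)) (\<lambda>_. bpf (Suc t)) (\<lambda>_. bmf (Suc t)) gp t K')
     \<and> Kmf t = (SOME K. \<forall>K'. Fminus M s P T (\<lambda>_. apf (Suc t)) (\<lambda>_. amf (Suc t)) (\<lambda>_. bpf (Suc t)) (\<lambda>_. bmf (Suc t)) gm t K
                   \<le> Fminus M s P T (\<lambda>_. apf (Suc t)) (\<lambda>_. amf (Suc t)) (\<lambda>_. bpf (Suc t)) (\<lambda>_. bmf (Suc t)) gm t K')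
     \<and> (apf t, amf t, bpf t, bmf t) = nxt M s P T t (Kpf t) (Kmf t) (apf (Suc t)) (amf (Suc t)) (bpf (Suc t)) (bmf (Suc t))"
    if t: "t < T" for t
  proof -
    have e: "T - t = Suc (T - Suc t)" "T - Suc (T - Suc t) = t" using t by auto
    obtain K1 K2 a1 a2 b1 b2 where BS: "B (Suc t) = (K1, K2, a1, a2, b1, b2)" by (cases "B (Suc t)") auto
    have BS': "bld M s P T gp gm (T - Suc t) = (K1, K2, a1, a2, b1, b2)" using BS unfolding B_def .
    have v: "apf (Suc t) = a1" "amf (Suc t) = a2" "bpf (Suc t) = b1" "bmf (Suc t) = b2"
      unfolding apf_def amf_def bpf_def bmf_def BS by simp_all
    show ?thesis unfolding v unfolding Kpf_def Kmf_def apf_def amf_def bpf_def bmf_def B_def e(1)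
      by (simp add: BS' e(2) Let_def)
  qed
  have R: "recursion_from M s P T gp gm Kpf Kmf apf amf bpf bmf (T - k)" if "k \<le> T" for k
    using that
  proof (induction k)
    case 0
    show ?case unfolding recursion_from_def using BT by auto
  next
    case (Suc k)
    define t where "t = T - Suc k"
    have t: "t < T" and tk: "T - k = Suc t" using Suc.prems unfolding t_def by auto
    have rec1: "recursion_from M s P T gp gm Kpf Kmf apf amf bpf bmf (Suc t)" using Suc tk by simp
    note EM = exist_min[OF t rec1]
    note BS = Bstep[OF t]
    have cp: "Fplus M s P T apf amf bpf bmf gp t K = Fplus M s P T (\<lambda>_. apf (Suc t)) (\<lambda>_. amf (Suc t)) (\<lambda>_. bpf (Suc t)) (\<lambda>_. bmf (Suc t)) gp t K" for K
      by (rule Fplus_cong) simp_all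
    have cm: "Fminus M s P T apf amf bpf bmf gm t K = Fminus M s P T (\<lambda>_. apf (Suc t)) (\<lambda>_. amf (Suc t)) (\<lambda>_. bpf (Suc t)) (\<lambda>_. bmf (Suc t)) gm t K" for K
      by (rule Fminus_cong) simp_all
    have m1: "\<forall>K'. Fplus M s P T apf amf bpf bmf gp t (Kpf t) \<le> Fplus M s P T apf amf bpf bmf gp t K'"
      unfolding cp BS[THEN conjunct1] by (rule someI_ex) (use EM cp in auto)
    have m2: "\<forall>K'. Fminus M s P T apf amf bpf bmf gm t (Kmf t) \<le> Fminus M s P T apf amf bpf bmf gm t K'"
      unfolding cm BS[THEN conjunct2, THEN conjunct1] by (rule someI_ex) (use EM cm in auto)
    have vals: "(apf t, amf t, bpf t, bmf t) = nxt M s P T t (Kpf t) (Kmf t) (apf (Suc t)) (amf (Suc t)) (bpf (Suc t)) (bmf (Suc t))"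
      using BS by blast
    have step: "recursion_step M s P T gp gm Kpf Kmf apf amf bpf bmf t"
      using m1 m2 vals unfolding recursion_step_def nxt_def Let_def by simp
    show ?case unfolding recursion_from_def t_def[symmetric]
    proof (intro conjI allI impI)
      show "apf T = 0" "amf T = 0" "bpf T = 0" "bmf T = 0" by (rule BT)+
      fix t' assume "t \<le> t' \<and> t' < T"
      then show "recursion_step M s P T gp gm Kpf Kmf apf amf bpf bmf t'"
      proof (cases "t' = t")
        case True then show ?thesis using step by simp
      next
        case False
        then have "Suc t \<le> t'" using \<open>t \<le> t' \<and> t' < T\<close> by simp
        then show ?thesis using rec1 \<open>t \<le> t' \<and> t' < T\<close> unfolding recursion_from_def by blast
      qed
    qed
  qed
  show ?thesis using R[of T] by (simp only: diff_self_eq_0) blast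
qed

end

context mpK
begin

lemma final_EV:
  assumes t00: "t0 = 0"
  shows "integral\<^sup>L M (wealth s P (tc_policy s T W Kp Km) 0 T x0)
             = rho s T 0 * x0
               + ap 0 * (x0 - W / rho s T 0) * of_bool (x0 \<ge> W / rho s T 0)
               + am 0 * (x0 - W / rho s T 0) * of_bool (x0 < W / rho s T 0)
         \<and> var M (wealth s P (tc_policy s T W Kp Km) 0 T x0)
             = ((bp 0 - (ap 0)\<^sup>2) * of_bool (x0 \<ge> W / rho s T 0)
                + (bm 0 - (am 0)\<^sup>2) * of_bool (x0 < W / rho s T 0)) * (x0 - W / rho s T 0)\<^sup>2"
proof -
  define d where "d = x0 - W / rho s T 0"
  have PH: "PH 0" using main[of 0] t00 by simp
  then have i: "integrable M (hp 0)" "integrable M (\<lambda>\<omega>. (hp 0 \<omega>)\<^sup>2)" "integrable M (hm 0)" "integrable M (\<lambda>\<omega>. (hm 0 \<omega>)\<^sup>2)"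
    and e: "integral\<^sup>L M (hp 0) = ap 0" "integral\<^sup>L M (\<lambda>\<omega>. (hp 0 \<omega>)\<^sup>2) = bp 0"
      "integral\<^sup>L M (hm 0) = am 0" "integral\<^sup>L M (\<lambda>\<omega>. (hm 0 \<omega>)\<^sup>2) = bm 0"
    unfolding PH_def by auto
  have vp: "var M (hp 0) = bp 0 - (ap 0)\<^sup>2" "var M (hm 0) = bm 0 - (am 0)\<^sup>2"
    using var_eq_prob[OF prob_space_axioms i(1,2)] var_eq_prob[OF prob_space_axioms i(3,4)] e by auto
  have wh: "wealth s P (tc_policy s T W Kp Km) 0 T x0 = (\<lambda>\<omega>. rho s T 0 * x0 + pl (hp 0 \<omega>) (hm 0 \<omega>) d)"
    using wealth_hom[OF spos, where t=0 and k=T and x=x0 and P=P and W=W and Kp=Kp and Km=Km]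
    unfolding hp_def hm_def d_def by auto
  show ?thesis
  proof (cases "d \<ge> 0")
    case True
    have w: "wealth s P (tc_policy s T W Kp Km) 0 T x0 = (\<lambda>\<omega>. rho s T 0 * x0 + d * hp 0 \<omega>)"
      unfolding wh using True by (simp add: pl_if mult.commute)
    have v: "var M (\<lambda>\<omega>. rho s T 0 * x0 + d * hp 0 \<omega>) = d\<^sup>2 * (bp 0 - (ap 0)\<^sup>2)"
      using var_shift[OF prob_space_axioms, of "\<lambda>\<omega>. d * hp 0 \<omega>"] i(1) var_scale[of M d "hp 0"] vp by simp
    show ?thesis unfolding w v using True i e unfolding d_def by (simp add: prob_space algebra_simps)
  next
    case False
    have w: "wealth s P (tc_policy s T W Kp Km) 0 T x0 = (\<lambda>\<omega>. rho s T 0 * x0 + d * hm 0 \<omega>)"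
      unfolding wh using False by (simp add: pl_if mult.commute)
    have v: "var M (\<lambda>\<omega>. rho s T 0 * x0 + d * hm 0 \<omega>) = d\<^sup>2 * (bm 0 - (am 0)\<^sup>2)"
      using var_shift[OF prob_space_axioms, of "\<lambda>\<omega>. d * hm 0 \<omega>"] i(3) var_scale[of M d "hm 0"] vp by simp
    show ?thesis unfolding w v using False i e unfolding d_def by (simp add: prob_space algebra_simps)
  qed
qed

end


theorem theorem1:
  fixes M :: "'w measure" and P :: "nat \<Rightarrow> 'w \<Rightarrow> real^'n"
    and s gp gm :: "nat \<Rightarrow> real" and T :: nat and W :: real
  assumes prob: "prob_space M"
    and s_gt1: "\<And>t. t < T \<Longrightarrow> s t > 1"
    and meas: "\<And>t. t < T \<Longrightarrow> P t \<in> borel_measurable M"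
    and indep: "prob_space.indep_vars M (\<lambda>_. borel) P {..<T}"
    and abs_cont: "\<And>t. t < T \<Longrightarrow> absolutely_continuous lborel (distr M lborel (P t))"
    and int1: "\<And>t i. t < T \<Longrightarrow> integrable M (\<lambda>\<omega>. P t \<omega> $ i)"
    and int2: "\<And>t i. t < T \<Longrightarrow> integrable M (\<lambda>\<omega>. (P t \<omega> $ i)\<^sup>2)"
    and cov_pd: "\<And>t. t < T \<Longrightarrow> pos_def_matrix (cov_matrix M (P t))"
    and no_arb: "\<And>t L. t < T \<Longrightarrow> L \<noteq> 0 \<Longrightarrow>
        \<not> (AE \<omega> in M. P t \<omega> \<bullet> L \<le> 0) \<and> \<not> (AE \<omega> in M. P t \<omega> \<bullet> L \<ge> 0)"
    and gp_nonneg: "\<And>t. gp t \<ge> 0"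
    and gm_nonneg: "\<And>t. gm t \<ge> 0"
  shows
    \<comment> \<open>well-definedness: at every step the minimizers exist, whatever was chosen before\<close>
    "(\<forall>t<T. \<forall>Kp Km ap am bp bm.
        recursion_from M s P T gp gm Kp Km ap am bp bm (Suc t) \<longrightarrow>
          (\<exists>K. \<forall>K'. Fplus M s P T ap am bp bm gp t K \<le> Fplus M s P T ap am bp bm gp t K')
        \<and> (\<exists>K. \<forall>K'. Fminus M s P T ap am bp bm gm t K \<le> Fminus M s P T ap am bp bm gm t K'))
   \<and> (\<exists>Kp Km ap am bp bm. recursion_from M s P T gp gm Kp Km ap am bp bm 0)
   \<and> (\<forall>Kp Km ap am bp bm. recursion_from M s P T gp gm Kp Km ap am bp bm 0 \<longrightarrow>
        (\<forall>t\<le>T. bp t - (ap t)\<^sup>2 \<ge> 0 \<and> bm t - (am t)\<^sup>2 \<ge> 0)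
      \<and> time_consistent M s P T (gamma_beh s T W gp gm) (tc_policy s T W Kp Km)
      \<and> (\<forall>x0.
           integral\<^sup>L M (wealth s P (tc_policy s T W Kp Km) 0 T x0)
             = rho s T 0 * x0
               + ap 0 * (x0 - W / rho s T 0) * of_bool (x0 \<ge> W / rho s T 0)
               + am 0 * (x0 - W / rho s T 0) * of_bool (x0 < W / rho s T 0)
         \<and> var M (wealth s P (tc_policy s T W Kp Km) 0 T x0)
             = ((bp 0 - (ap 0)\<^sup>2) * of_bool (x0 \<ge> W / rho s T 0)
                + (bm 0 - (am 0)\<^sup>2) * of_bool (x0 < W / rho s T 0)) * (x0 - W / rho s T 0)\<^sup>2))"
proof -
  interpret mp M P s T
    by (rule mp.intro[OF prob mp_axioms.intro[OF s_gt1 meas indep abs_cont int1 int2 no_arb]])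
  have C1: "\<forall>t<T. \<forall>Kp Km ap am bp bm.
        recursion_from M s P T gp gm Kp Km ap am bp bm (Suc t) \<longrightarrow>
          (\<exists>K. \<forall>K'. Fplus M s P T ap am bp bm gp t K \<le> Fplus M s P T ap am bp bm gp t K')
        \<and> (\<exists>K. \<forall>K'. Fminus M s P T ap am bp bm gm t K \<le> Fminus M s P T ap am bp bm gm t K')"
  proof (intro allI impI)
    fix t Kp Km ap am bp bm
    assume "t < T" "recursion_from M s P T gp gm Kp Km ap am bp bm (Suc t)"
    then show "(\<exists>K. \<forall>K'. Fplus M s P T ap am bp bm gp t K \<le> Fplus M s P T ap am bp bm gp t K')
        \<and> (\<exists>K. \<forall>K'. Fminus M s P T ap am bp bm gm t K \<le> Fminus M s P T ap am bp bm gm t K')"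
      by (rule exist_min)
  qed
  have C2: "\<exists>Kp Km ap am bp bm. recursion_from M s P T gp gm Kp Km ap am bp bm 0"
    by (rule build_rec)
  have C3: "(\<forall>t\<le>T. bp t - (ap t)\<^sup>2 \<ge> 0 \<and> bm t - (am t)\<^sup>2 \<ge> 0)
      \<and> time_consistent M s P T (gamma_beh s T W gp gm) (tc_policy s T W Kp Km)
      \<and> (\<forall>x0.
           integral\<^sup>L M (wealth s P (tc_policy s T W Kp Km) 0 T x0)
             = rho s T 0 * x0
               + ap 0 * (x0 - W / rho s T 0) * of_bool (x0 \<ge> W / rho s T 0)
               + am 0 * (x0 - W / rho s T 0) * of_bool (x0 < W / rho s T 0)
         \<and> var M (wealth s P (tc_policy s T W Kp Km) 0 T x0)
             = ((bp 0 - (ap 0)\<^sup>2) * of_bool (x0 \<ge> W / rho s T 0)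
                + (bm 0 - (am 0)\<^sup>2) * of_bool (x0 < W / rho s T 0)) * (x0 - W / rho s T 0)\<^sup>2)"
    if rec0: "recursion_from M s P T gp gm Kp Km ap am bp bm 0" for Kp Km ap am bp bm
  proof -
    interpret Kl: mpK M P s T gp gm Kp Km ap am bp bm 0
      by unfold_locales (rule rec0)
    have a: "\<forall>t\<le>T. bp t - (ap t)\<^sup>2 \<ge> 0 \<and> bm t - (am t)\<^sup>2 \<ge> 0"
      using Kl.v_nonneg by auto
    have b: "time_consistent M s P T (gamma_beh s T W gp gm) (tc_policy s T W Kp Km)"
      unfolding time_consistent_def using Kl.TC by simp
    have c: "\<forall>x0. integral\<^sup>L M (wealth s P (tc_policy s T W Kp Km) 0 T x0)
             = rho s T 0 * x0
               + ap 0 * (x0 - W / rho s T 0) * of_bool (x0 \<ge> W / rho s T 0)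
               + am 0 * (x0 - W / rho s T 0) * of_bool (x0 < W / rho s T 0)
         \<and> var M (wealth s P (tc_policy s T W Kp Km) 0 T x0)
             = ((bp 0 - (ap 0)\<^sup>2) * of_bool (x0 \<ge> W / rho s T 0)
                + (bm 0 - (am 0)\<^sup>2) * of_bool (x0 < W / rho s T 0)) * (x0 - W / rho s T 0)\<^sup>2"
      using Kl.final_EV[OF refl] by blast
    show ?thesis using a b c by (intro conjI)
  qed
  show ?thesis using C1 C2 C3 by (intro conjI) auto
qed

end
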